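(* Let $(G,X,\Gamma)$ be a $(\mu,\nu)$-path system group containing a $\delta$-constricting element $(g,A)$. There exist $\theta\ge1$ and an integer $M\in[1,\theta]$ such that for every $u\in G$ the following are equivalent: (I) $u\in E(g,A)$; (II) there exists $p\in\{-1,1\}$ with $ug^Mu^{-1}=g^{pM}$; (III) there exist $m,n\in\mathbb Z\setminus\{0\}$ with $ug^mu^{-1}=g^n$. Moreover, setting $E^+(g,A)=\{u\in G: ug^Mu^{-1}=g^M\}$, we have $[E(g,A):E^+(g,A)]\le2$.
   Context: A path is a rectifiable continuous map $\alpha\colon[a,b]\to X$ parametrised by arc length; it is a $(\kappa,\lambda)$-quasi-geodesic if $d(\alpha(t),\alpha(t'))\le|t-t'|\le\kappa d(\alpha(t),\alpha(t'))+\lambda$. A $(\mu,\nu)$-path system group $(G,X,\Gamma)$ is a group $G$ acting properly by isometries on a geodesic metric space $X$ together with a $G$-invariant collection $\Gamma$ of paths closed under subpaths, such that any two points are joined by an element of $\Gamma$ and every element is a $(\mu,\nu)$-quasi-geodesic. A map $\pi_A\colon X\to A$ is $\delta$-constricting if (CS1) $d(x,\pi_A(x))\le\delta$ for $x\in A$, and (CS2) for all $x,y\in X$ and $\gamma\in\Gamma$ joining them, if $d(\pi_A(x),\pi_A(y))>\delta$ then $\gamma$ meets $B_X(\pi_A(x),\delta)$ and $B_X(\pi_A(y),\delta)$. An element $g$ is $\delta$-constricting, written $(g,A)$, if it has infinite order and $A$ is a $\langle g\rangle$-invariant subset admitting a $\delta$-constricting map, on which $\langle g\rangle$ acts $\delta$-coboundedly.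 The elementary closure is $E(g,A)=\{u\in G: d_{Haus}(uA,A)<\infty\}$, $d_{Haus}$ denoting Hausdorff distance. *)

theory Defs
  imports "HOL-Analysis.Analysis" "HOL-Algebra.Algebra"
begin

text \<open>A path is represented by a triple (a, b, alpha) with alpha :: real => X,
  only its values on the interval [a,b] being relevant.\<close>

type_synonym 'x rpath = "real \<times> real \<times> (real \<Rightarrow> 'x)"

definition geodesic_space :: "'x::metric_space itself \<Rightarrow> bool" where
  "geodesic_space _ \<longleftrightarrow>
     (\<forall>x y::'x. \<exists>\<gamma>::real \<Rightarrow> 'x. \<gamma> 0 = x \<and> \<gamma> (dist x y) = y \<and>
        (\<forall>s\<in>{0..dist x y}. \<forall>t\<in>{0..dist x y}. dist (\<gamma> s) (\<gamma> t) = \<bar>s - t\<bar>))"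

definition curve_length :: "(real \<Rightarrow> 'x::metric_space) \<Rightarrow> real \<Rightarrow> real \<Rightarrow> ereal" where
  "curve_length \<alpha> a b =
     (SUP ts \<in> {ts. sorted ts \<and> set ts \<subseteq> {a..b}}.
        ereal (\<Sum>i<length ts - 1. dist (\<alpha> (ts ! i)) (\<alpha> (ts ! Suc i))))"

definition is_path :: "'x::metric_space rpath \<Rightarrow> bool" where
  "is_path p \<longleftrightarrow> (case p of (a, b, \<alpha>) \<Rightarrow>
     a \<le> b \<and> continuous_on {a..b} \<alpha> \<and> curve_length \<alpha> a b < \<infinity> \<and>
     (\<forall>s t. a \<le> s \<and> s \<le> t \<and> t \<le> b \<longrightarrow> curve_length \<alpha> s t = ereal (t - s)))"

definition quasi_geodesic :: "real \<Rightarrow> real \<Rightarrow> 'x::metric_space rpath \<Rightarrow> bool" where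
  "quasi_geodesic \<kappa> lam p \<longleftrightarrow> is_path p \<and> (case p of (a, b, \<alpha>) \<Rightarrow>
     (\<forall>t\<in>{a..b}. \<forall>t'\<in>{a..b}. dist (\<alpha> t) (\<alpha> t') \<le> \<bar>t - t'\<bar> \<and>
        \<bar>t - t'\<bar> \<le> \<kappa> * dist (\<alpha> t) (\<alpha> t') + lam))"

definition isometric_action :: "('g, 'b) monoid_scheme \<Rightarrow> ('g \<Rightarrow> 'x::metric_space \<Rightarrow> 'x) \<Rightarrow> bool" where
  "isometric_action G \<phi> \<longleftrightarrow> group G \<and>
     (\<forall>g\<in>carrier G. \<forall>x y. dist (\<phi> g x) (\<phi> g y) = dist x y) \<and>
     (\<forall>x. \<phi> \<one>\<^bsub>G\<^esub> x = x) \<and>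
     (\<forall>g\<in>carrier G. \<forall>h\<in>carrier G. \<forall>x. \<phi> (g \<otimes>\<^bsub>G\<^esub> h) x = \<phi> g (\<phi> h x))"

definition proper_action :: "('g, 'b) monoid_scheme \<Rightarrow> ('g \<Rightarrow> 'x::metric_space \<Rightarrow> 'x) \<Rightarrow> bool" where
  "proper_action G \<phi> \<longleftrightarrow> (\<forall>x r. finite {g \<in> carrier G. dist x (\<phi> g x) \<le> r})"

definition path_system_group ::
  "real \<Rightarrow> real \<Rightarrow> ('g, 'b) monoid_scheme \<Rightarrow> ('g \<Rightarrow> 'x::metric_space \<Rightarrow> 'x) \<Rightarrow> 'x rpath set \<Rightarrow> bool" where
  "path_system_group \<mu> \<nu> G \<phi> \<Gamma> \<longleftrightarrow>
     geodesic_space TYPE('x) \<and> isometric_action G \<phi> \<and> proper_action G \<phi> \<and>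
     (\<forall>a b \<alpha> g. (a, b, \<alpha>) \<in> \<Gamma> \<and> g \<in> carrier G \<longrightarrow> (a, b, \<phi> g \<circ> \<alpha>) \<in> \<Gamma>) \<and>
     (\<forall>a b \<alpha> c d. (a, b, \<alpha>) \<in> \<Gamma> \<and> a \<le> c \<and> c \<le> d \<and> d \<le> b \<longrightarrow> (c, d, \<alpha>) \<in> \<Gamma>) \<and>
     (\<forall>x y. \<exists>a b \<alpha>. (a, b, \<alpha>) \<in> \<Gamma> \<and> \<alpha> a = x \<and> \<alpha> b = y) \<and>
     (\<forall>p\<in>\<Gamma>. quasi_geodesic \<mu> \<nu> p)"

definition constricting_map :: "'x::metric_space rpath set \<Rightarrow> real \<Rightarrow> 'x set \<Rightarrow> ('x \<Rightarrow> 'x) \<Rightarrow> bool" where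
  "constricting_map \<Gamma> \<delta> A \<pi> \<longleftrightarrow>
     (\<forall>x. \<pi> x \<in> A) \<and>
     (\<forall>x\<in>A. dist x (\<pi> x) \<le> \<delta>) \<and>
     (\<forall>x y a b \<alpha>. (a, b, \<alpha>) \<in> \<Gamma> \<and> \<alpha> a = x \<and> \<alpha> b = y \<and> dist (\<pi> x) (\<pi> y) > \<delta> \<longrightarrow>
        (\<exists>t\<in>{a..b}. dist (\<alpha> t) (\<pi> x) \<le> \<delta>) \<and> (\<exists>t\<in>{a..b}. dist (\<alpha> t) (\<pi> y) \<le> \<delta>))"

definition constricting_element ::
  "('g, 'b) monoid_scheme \<Rightarrow> ('g \<Rightarrow> 'x::metric_space \<Rightarrow> 'x) \<Rightarrow> 'x rpath set \<Rightarrow> real \<Rightarrow> 'g \<Rightarrow> 'x set \<Rightarrow> bool" where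
  "constricting_element G \<phi> \<Gamma> \<delta> g A \<longleftrightarrow>
     g \<in> carrier G \<and>
     (\<forall>n::nat. n > 0 \<longrightarrow> g [^]\<^bsub>G\<^esub> n \<noteq> \<one>\<^bsub>G\<^esub>) \<and>
     (\<forall>k::int. \<phi> (g [^]\<^bsub>G\<^esub> k) ` A = A) \<and>
     (\<exists>\<pi>. constricting_map \<Gamma> \<delta> A \<pi>) \<and>
     (\<forall>x\<in>A. \<forall>y\<in>A. \<exists>k::int. dist (\<phi> (g [^]\<^bsub>G\<^esub> k) x) y \<le> \<delta>)"

definition finite_hausdorff :: "'x::metric_space set \<Rightarrow> 'x set \<Rightarrow> bool" where
  "finite_hausdorff B A \<longleftrightarrow>
     (\<exists>r. (\<forall>a\<in>A. \<exists>b\<in>B. dist a b \<le> r) \<and> (\<forall>b\<in>B. \<exists>a\<in>A. dist a b \<le> r))"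

definition elementary_closure ::
  "('g, 'b) monoid_scheme \<Rightarrow> ('g \<Rightarrow> 'x::metric_space \<Rightarrow> 'x) \<Rightarrow> 'x set \<Rightarrow> 'g set" where
  "elementary_closure G \<phi> A = {u \<in> carrier G. finite_hausdorff (\<phi> u ` A) A}"

end

theory Submission
  imports Defs
begin

lemma infdist_lessE:
  assumes "A \<noteq> {}" "infdist x A < e"
  obtains a where "a \<in> A" "dist x a < e"
proof -
  have "(INF a\<in>A. dist x a) < e" using assms(2) infdist_notempty[OF assms(1)] by simp
  then have "\<exists>a\<in>A. dist x a < e"
    using assms(1) by (subst (asm) cINF_less_iff) (auto intro: bdd_belowI[where m=0])
  then show ?thesis using that by blast
qed

lemma dist_tri3: "dist a d \<le> dist a b + dist b c + dist c d"
  using dist_triangle[of a d b] dist_triangle[of b d c] by linarith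
lemma dist_tri4: "dist a e \<le> dist a b + dist b c + dist c d + dist d e"
  using dist_triangle[of a e b] dist_tri3[of b e c d] by linarith
lemma dist_tri5: "dist a f \<le> dist a b + dist b c + dist c d + dist d e + dist e f"
  using dist_triangle[of a f b] dist_tri4[of b f c d e] by linarith

context group begin

lemma inv_cancel_l1 [simp]: "x \<in> carrier G \<Longrightarrow> y \<in> carrier G \<Longrightarrow> inv x \<otimes> (x \<otimes> y) = y"
  by (simp add: m_assoc[symmetric])
lemma inv_cancel_l2 [simp]: "x \<in> carrier G \<Longrightarrow> y \<in> carrier G \<Longrightarrow> x \<otimes> (inv x \<otimes> y) = y"
  by (simp add: m_assoc[symmetric])

lemma conj_hom: "c \<in> carrier G \<Longrightarrow> (\<lambda>x. c \<otimes> x \<otimes> inv c) \<in> hom G G"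
proof -
  assume c: "c \<in> carrier G"
  have "c \<otimes> (x \<otimes> y) \<otimes> inv c = (c \<otimes> x \<otimes> inv c) \<otimes> (c \<otimes> y \<otimes> inv c)"
    if "x \<in> carrier G" "y \<in> carrier G" for x y
  proof -
    have "(c \<otimes> x \<otimes> inv c) \<otimes> (c \<otimes> y \<otimes> inv c) = c \<otimes> x \<otimes> (inv c \<otimes> c) \<otimes> y \<otimes> inv c"
      using c that by (simp add: m_assoc)
    also have "\<dots> = c \<otimes> (x \<otimes> y) \<otimes> inv c" using c that by (simp add: m_assoc)
    finally show ?thesis by simp
  qed
  then show ?thesis unfolding hom_def using c by auto
qed

lemma conj_int_pow:
  assumes "c \<in> carrier G" "x \<in> carrier G"
  shows "c \<otimes> x [^] (k::int) \<otimes> inv c = (c \<otimes> x \<otimes> inv c) [^] k"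
  using hom_int_pow[OF conj_hom[OF assms(1)] assms(2) is_group is_group] by simp

lemma pow_inj:
  assumes "g \<in> carrier G" "\<forall>n::nat. n > 0 \<longrightarrow> g [^] n \<noteq> \<one>"
  shows "g [^] (m::int) = g [^] (n::int) \<longleftrightarrow> m = n"
proof -
  have "ord g = 0" using assms ord_eq_0 by auto
  then show ?thesis using int_pow_eq[OF assms(1)] by auto
qed

end

definition Lc :: "real \<Rightarrow> real \<Rightarrow> real \<Rightarrow> real" where
  "Lc \<mu> \<nu> \<rho> = \<bar>\<mu>\<bar> * \<rho> + \<bar>\<nu>\<bar>"

definition hc :: "real \<Rightarrow> real \<Rightarrow> real \<Rightarrow> real \<Rightarrow> real" where
  "hc \<mu> \<nu> \<delta> \<rho> = \<rho> + 2 * \<delta> + Lc \<mu> \<nu> \<rho>"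

lemma Lc_mono: "x \<le> y \<Longrightarrow> Lc \<mu> \<nu> x \<le> Lc \<mu> \<nu> y"
  unfolding Lc_def by (simp add: mult_left_mono)

lemma Lc_nonneg: "0 \<le> x \<Longrightarrow> 0 \<le> Lc \<mu> \<nu> x"
  unfolding Lc_def by simp

lemma hc_mono: "x \<le> y \<Longrightarrow> hc \<mu> \<nu> \<delta> x \<le> hc \<mu> \<nu> \<delta> y"
  unfolding hc_def using Lc_mono[of x y \<mu> \<nu>] by simp

locale PSys =
  fixes \<mu> \<nu> :: real and G :: "('g, 'b) monoid_scheme" and \<phi> :: "'g \<Rightarrow> 'x::metric_space \<Rightarrow> 'x"
    and \<Gamma> :: "'x rpath set"
  assumes psg: "path_system_group \<mu> \<nu> G \<phi> \<Gamma>"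
begin

lemma grp: "group G"
  using psg unfolding path_system_group_def isometric_action_def by auto

lemma isom: "h \<in> carrier G \<Longrightarrow> dist (\<phi> h x) (\<phi> h y) = dist x y"
  using psg unfolding path_system_group_def isometric_action_def by auto

lemma act_one: "\<phi> \<one>\<^bsub>G\<^esub> x = x"
  using psg unfolding path_system_group_def isometric_action_def by auto

lemma act_mult: "h \<in> carrier G \<Longrightarrow> k \<in> carrier G \<Longrightarrow> \<phi> (h \<otimes>\<^bsub>G\<^esub> k) x = \<phi> h (\<phi> k x)"
  using psg unfolding path_system_group_def isometric_action_def by auto

lemma act_inv1: "h \<in> carrier G \<Longrightarrow> \<phi> (inv\<^bsub>G\<^esub> h) (\<phi> h x) = x"
  by (metis act_mult act_one group.inv_closed group.l_inv grp)

lemma act_inv2: "h \<in> carrier G \<Longrightarrow> \<phi> h (\<phi> (inv\<^bsub>G\<^esub> h) x) = x"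
  by (metis act_mult act_one group.inv_closed group.r_inv grp)

lemma proper: "finite {h \<in> carrier G. dist x (\<phi> h x) \<le> r}"
  using psg unfolding path_system_group_def proper_action_def by auto

lemma G_inv: "(a, b, \<alpha>) \<in> \<Gamma> \<Longrightarrow> h \<in> carrier G \<Longrightarrow> (a, b, \<phi> h \<circ> \<alpha>) \<in> \<Gamma>"
  using psg unfolding path_system_group_def by blast

lemma G_sub: "(a, b, \<alpha>) \<in> \<Gamma> \<Longrightarrow> a \<le> c \<Longrightarrow> c \<le> d \<Longrightarrow> d \<le> b \<Longrightarrow> (c, d, \<alpha>) \<in> \<Gamma>"
  using psg unfolding path_system_group_def by blast

lemma G_ex: obtains a b \<alpha> where "(a, b, \<alpha>) \<in> \<Gamma>" "\<alpha> a = x" "\<alpha> b = y"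
  using psg unfolding path_system_group_def by blast

lemma G_qg:
  assumes "(a, b, \<alpha>) \<in> \<Gamma>"
  shows "a \<le> b" and "\<And>t t'. t \<in> {a..b} \<Longrightarrow> t' \<in> {a..b} \<Longrightarrow> dist (\<alpha> t) (\<alpha> t') \<le> \<bar>t - t'\<bar>"
    and "\<And>t t'. t \<in> {a..b} \<Longrightarrow> t' \<in> {a..b} \<Longrightarrow> \<bar>t - t'\<bar> \<le> \<mu> * dist (\<alpha> t) (\<alpha> t') + \<nu>"
proof -
  have q: "quasi_geodesic \<mu> \<nu> (a, b, \<alpha>)"
    using psg assms unfolding path_system_group_def by blast
  then show "a \<le> b" unfolding quasi_geodesic_def is_path_def by auto
  show "\<And>t t'. t \<in> {a..b} \<Longrightarrow> t' \<in> {a..b} \<Longrightarrow> dist (\<alpha> t) (\<alpha> t') \<le> \<bar>t - t'\<bar>"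
    using q unfolding quasi_geodesic_def by auto
  show "\<And>t t'. t \<in> {a..b} \<Longrightarrow> t' \<in> {a..b} \<Longrightarrow> \<bar>t - t'\<bar> \<le> \<mu> * dist (\<alpha> t) (\<alpha> t') + \<nu>"
    using q unfolding quasi_geodesic_def by auto
qed

lemma G_len:
  assumes "(a, b, \<alpha>) \<in> \<Gamma>" "a \<le> s" "s \<le> s'" "s' \<le> b"
  shows "s' - s \<le> Lc \<mu> \<nu> (dist (\<alpha> s) (\<alpha> s'))"
proof -
  have "\<bar>s - s'\<bar> \<le> \<mu> * dist (\<alpha> s) (\<alpha> s') + \<nu>" using G_qg(3)[OF assms(1), of s s'] assms by auto
  moreover have "\<mu> * dist (\<alpha> s) (\<alpha> s') \<le> \<bar>\<mu>\<bar> * dist (\<alpha> s) (\<alpha> s')"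
    by (simp add: mult_right_mono)
  ultimately show ?thesis using assms unfolding Lc_def by auto
qed

lemma G_lip:
  assumes "(a, b, \<alpha>) \<in> \<Gamma>" "t \<in> {a..b}" "t' \<in> {a..b}"
  shows "dist (\<alpha> t) (\<alpha> t') \<le> \<bar>t - t'\<bar>"
  using G_qg(2)[OF assms(1)] assms by auto

lemma cm_cs2:
  assumes cm: "constricting_map \<Gamma> \<delta> S \<pi>" and P: "(a, b, \<alpha>) \<in> \<Gamma>"
    and d: "\<delta> < dist (\<pi> (\<alpha> a)) (\<pi> (\<alpha> b))"
  shows "(\<exists>t\<in>{a..b}. dist (\<alpha> t) (\<pi> (\<alpha> a)) \<le> \<delta>) \<and> (\<exists>t\<in>{a..b}. dist (\<alpha> t) (\<pi> (\<alpha> b)) \<le> \<delta>)"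
proof -
  have "\<forall>x y a b \<alpha>. (a, b, \<alpha>) \<in> \<Gamma> \<and> \<alpha> a = x \<and> \<alpha> b = y \<and> dist (\<pi> x) (\<pi> y) > \<delta> \<longrightarrow>
        (\<exists>t\<in>{a..b}. dist (\<alpha> t) (\<pi> x) \<le> \<delta>) \<and> (\<exists>t\<in>{a..b}. dist (\<alpha> t) (\<pi> y) \<le> \<delta>)"
    using cm unfolding constricting_map_def by (elim conjE)
  from this[rule_format, of a b \<alpha> "\<alpha> a" "\<alpha> b"] P d show ?thesis by simp
qed

lemma cm_in: "constricting_map \<Gamma> \<delta> S \<pi> \<Longrightarrow> \<pi> x \<in> S"
  unfolding constricting_map_def by (elim conjE) simp

lemma cm_near: "constricting_map \<Gamma> \<delta> S \<pi> \<Longrightarrow> x \<in> S \<Longrightarrow> dist x (\<pi> x) \<le> \<delta>"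
  unfolding constricting_map_def by (elim conjE) simp

lemma factP:
  assumes cm: "constricting_map \<Gamma> \<delta> S \<pi>" and s: "s \<in> S" "dist z s \<le> \<rho>"
  shows "dist z (\<pi> z) \<le> hc \<mu> \<nu> \<delta> \<rho>"
proof -
  have ns: "dist s (\<pi> s) \<le> \<delta>" using cm s unfolding constricting_map_def by auto
  have r0: "0 \<le> \<rho>" using s(2) zero_le_dist order_trans by blast
  have d0: "0 \<le> \<delta>" using ns zero_le_dist order_trans by blast
  show ?thesis
  proof (cases "dist (\<pi> z) (\<pi> s) \<le> \<delta>")
    case True
    have "dist z (\<pi> z) \<le> dist z s + dist s (\<pi> s) + dist (\<pi> s) (\<pi> z)"
      by (rule dist_tri3)
    also have "\<dots> \<le> \<rho> + \<delta> + \<delta>" using True ns s by (simp add: dist_commute)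
    finally show ?thesis unfolding hc_def using Lc_nonneg[where \<mu>=\<mu> and \<nu>=\<nu>, OF r0] by simp
  next
    case False
    obtain a b \<alpha> where P: "(a, b, \<alpha>) \<in> \<Gamma>" "\<alpha> a = z" "\<alpha> b = s" by (rule G_ex)
    then obtain t where t: "t \<in> {a..b}" "dist (\<alpha> t) (\<pi> z) \<le> \<delta>"
      using cm False unfolding constricting_map_def by (metis not_le)
    have ab: "a \<le> b" using G_qg(1)[OF P(1)] .
    have "dist z (\<alpha> t) \<le> \<bar>a - t\<bar>" using G_lip[OF P(1), of a t] t ab P by auto
    also have "\<dots> \<le> b - a" using t by auto
    also have "\<dots> \<le> Lc \<mu> \<nu> (dist z s)" using G_len[OF P(1), of a b] ab P by auto
    also have "\<dots> \<le> Lc \<mu> \<nu> \<rho>" using Lc_mono s by auto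
    finally have "dist z (\<pi> z) \<le> Lc \<mu> \<nu> \<rho> + \<delta>"
      using t dist_triangle[of z "\<pi> z" "\<alpha> t"] by linarith
    then show ?thesis unfolding hc_def using r0 d0 by simp
  qed
qed

lemma factQ:
  assumes cm: "constricting_map \<Gamma> \<delta> S \<pi>" and P: "(a, b, \<alpha>) \<in> \<Gamma>"
    and far: "\<forall>t\<in>{a..b}. \<forall>y\<in>S. dist (\<alpha> t) y > \<delta>"
  shows "dist (\<pi> (\<alpha> a)) (\<pi> (\<alpha> b)) \<le> \<delta>"
proof (rule ccontr)
  assume "\<not> ?thesis"
  then obtain t where "t \<in> {a..b}" "dist (\<alpha> t) (\<pi> (\<alpha> a)) \<le> \<delta>"
    using cm P unfolding constricting_map_def by (metis not_le)
  moreover have "\<pi> (\<alpha> a) \<in> S" using cm unfolding constricting_map_def by auto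
  ultimately show False using far by force
qed

end

definition C1c :: "real \<Rightarrow> real \<Rightarrow> real \<Rightarrow> real" where
  "C1c \<mu> \<nu> \<delta> = Lc \<mu> \<nu> (2 * hc \<mu> \<nu> \<delta> (\<delta> + 4) + \<delta>) + \<delta> + 4"

context PSys begin

lemma morse:
  assumes cm: "constricting_map \<Gamma> \<delta> S \<pi>" and P: "(a, b, \<alpha>) \<in> \<Gamma>"
    and ea: "s1 \<in> S" "dist (\<alpha> a) s1 \<le> \<delta>" and eb: "s2 \<in> S" "dist (\<alpha> b) s2 \<le> \<delta>"
    and t: "a \<le> t" "t \<le> b"
  shows "\<exists>y\<in>S. dist (\<alpha> t) y \<le> C1c \<mu> \<nu> \<delta>"
proof -
  define \<eta> where "\<eta> = \<delta> + 1"
  define f where "f s = infdist (\<alpha> s) S" for s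
  have Sne: "S \<noteq> {}" using ea by auto
  have d0: "0 \<le> \<delta>" using ea(2) zero_le_dist order_trans by blast
  have C0: "0 \<le> 2 * hc \<mu> \<nu> \<delta> (\<delta> + 4) + \<delta>"
    unfolding hc_def using d0 Lc_nonneg[of "\<delta>+4" \<mu> \<nu>] by simp
  have C1ge: "\<delta> + 4 \<le> C1c \<mu> \<nu> \<delta>"
    unfolding C1c_def using Lc_nonneg[OF C0] by simp
  have near: "\<exists>y\<in>S. dist (\<alpha> s) y < \<eta> + 1" if "f s \<le> \<eta>" for s
    using infdist_lessE[OF Sne, of "\<alpha> s" "\<eta> + 1"] that unfolding f_def by force
  have ab: "a \<le> b" using t by auto
  show ?thesis
  proof (cases "f t \<le> \<eta>")
    case True
    then obtain y where "y \<in> S" "dist (\<alpha> t) y < \<eta> + 1" using near by blast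
    then show ?thesis using C1ge unfolding \<eta>_def by (intro bexI[of _ y]) auto
  next
    case False
    hence ft: "f t > \<eta>" by simp
    have fa: "f a \<le> \<eta>" using infdist_le[OF ea(1), of "\<alpha> a"] ea(2) unfolding f_def \<eta>_def by simp
    have fb: "f b \<le> \<eta>" using infdist_le[OF eb(1), of "\<alpha> b"] eb(2) unfolding f_def \<eta>_def by simp
    define T1 where "T1 = {s \<in> {a..t}. f s \<le> \<eta>}"
    define T2 where "T2 = {s \<in> {t..b}. f s \<le> \<eta>}"
    define t1 where "t1 = Sup T1"
    define t2 where "t2 = Inf T2"
    have aT1: "a \<in> T1" using fa t unfolding T1_def by auto
    have bT2: "b \<in> T2" using fb t unfolding T2_def by auto
    have bdd1: "bdd_above T1" unfolding T1_def by (rule bdd_aboveI[of _ t]) auto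
    have bdd2: "bdd_below T2" unfolding T2_def by (rule bdd_belowI[of _ t]) auto
    have t1a: "a \<le> t1" unfolding t1_def using cSup_upper[OF aT1 bdd1] .
    have t1t: "t1 \<le> t" unfolding t1_def using aT1 by (intro cSup_least) (auto simp: T1_def)
    have t2b: "t2 \<le> b" unfolding t2_def using cInf_lower[OF bT2 bdd2] .
    have t2t: "t \<le> t2" unfolding t2_def using bT2 by (intro cInf_greatest) (auto simp: T2_def)
    have "\<exists>x\<in>T1. t1 - 1 < x"
      using less_cSup_iff[of T1 "t1 - 1"] aT1 bdd1 unfolding t1_def by auto
    then obtain s0 where s0: "s0 \<in> T1" "t1 - 1 < s0" by blast
    have "\<exists>x\<in>T2. x < t2 + 1"
      using cInf_less_iff[of T2 "t2 + 1"] bT2 bdd2 unfolding t2_def by auto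
    then obtain s0' where s0': "s0' \<in> T2" "s0' < t2 + 1" by blast
    have s0le: "s0 \<le> t1" unfolding t1_def using cSup_upper[OF s0(1) bdd1] .
    have s0'ge: "t2 \<le> s0'" unfolding t2_def using cInf_lower[OF s0'(1) bdd2] .
    define u1 where "u1 = min t (t1 + 1)"
    define u2 where "u2 = max t (t2 - 1)"
    have big1: "f s > \<eta>" if "u1 \<le> s" "s \<le> t" for s
    proof (cases "s > t1")
      case True
      then have "s \<notin> T1" using cSup_upper[OF _ bdd1, of s] unfolding t1_def by auto
      then show ?thesis using that t1a True unfolding T1_def by auto
    next
      case False
      then have "s = t" using that t1t unfolding u1_def by auto
      then show ?thesis using ft by simp
    qed
    have big2: "f s > \<eta>" if "t \<le> s" "s \<le> u2" for s
    proof (cases "s < t2")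
      case True
      then have "s \<notin> T2" using cInf_lower[OF _ bdd2, of s] unfolding t2_def by auto
      then show ?thesis using that t2b True unfolding T2_def by auto
    next
      case False
      then have "s = t" using that t2t unfolding u2_def by auto
      then show ?thesis using ft by simp
    qed
    have big: "f s > \<eta>" if "u1 \<le> s" "s \<le> u2" for s
      using big1[of s] big2[of s] that by linarith
    have u1r: "a \<le> u1" "u1 \<le> t" using t1a t1t t unfolding u1_def by auto
    have u2r: "t \<le> u2" "u2 \<le> b" using t2b t2t t unfolding u2_def by auto
    have Psub: "(u1, u2, \<alpha>) \<in> \<Gamma>" using G_sub[OF P, of u1 u2] u1r u2r by auto
    have far: "\<forall>s\<in>{u1..u2}. \<forall>y\<in>S. dist (\<alpha> s) y > \<delta>"
    proof (intro ballI)
      fix s y assume "s \<in> {u1..u2}" "y \<in> S"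
      then have "f s > \<eta>" "f s \<le> dist (\<alpha> s) y" using big infdist_le unfolding f_def by auto
      then show "dist (\<alpha> s) y > \<delta>" unfolding \<eta>_def by simp
    qed
    have pq: "dist (\<pi> (\<alpha> u1)) (\<pi> (\<alpha> u2)) \<le> \<delta>" using factQ[OF cm Psub far] .
    obtain y0 where y0: "y0 \<in> S" "dist (\<alpha> s0) y0 < \<eta> + 1" using near[of s0] s0 unfolding T1_def by auto
    obtain y0' where y0': "y0' \<in> S" "dist (\<alpha> s0') y0' < \<eta> + 1" using near[of s0'] s0' unfolding T2_def by auto
    have s0r: "s0 \<in> {a..b}" using s0 t unfolding T1_def by auto
    have s0'r: "s0' \<in> {a..b}" using s0' t unfolding T2_def by auto
    have "dist (\<alpha> u1) (\<alpha> s0) \<le> \<bar>u1 - s0\<bar>" using G_lip[OF P, of u1 s0] s0r u1r t by auto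
    also have "\<dots> \<le> 2" using s0 s0le t1t unfolding u1_def by auto
    finally have "dist (\<alpha> u1) y0 \<le> \<delta> + 4"
      using y0 dist_triangle[of "\<alpha> u1" y0 "\<alpha> s0"] unfolding \<eta>_def by linarith
    then have h1: "dist (\<alpha> u1) (\<pi> (\<alpha> u1)) \<le> hc \<mu> \<nu> \<delta> (\<delta> + 4)" using factP[OF cm y0(1)] by blast
    have "dist (\<alpha> u2) (\<alpha> s0') \<le> \<bar>u2 - s0'\<bar>" using G_lip[OF P, of u2 s0'] s0'r u2r t by auto
    also have "\<dots> \<le> 2" using s0' s0'ge t2t unfolding u2_def by auto
    finally have "dist (\<alpha> u2) y0' \<le> \<delta> + 4"
      using y0' dist_triangle[of "\<alpha> u2" y0' "\<alpha> s0'"] unfolding \<eta>_def by linarith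
    then have h2: "dist (\<alpha> u2) (\<pi> (\<alpha> u2)) \<le> hc \<mu> \<nu> \<delta> (\<delta> + 4)" using factP[OF cm y0'(1)] by blast
    have "dist (\<alpha> u1) (\<alpha> u2) \<le> dist (\<alpha> u1) (\<pi> (\<alpha> u1)) + dist (\<pi> (\<alpha> u1)) (\<pi> (\<alpha> u2)) + dist (\<pi> (\<alpha> u2)) (\<alpha> u2)"
      by (rule dist_tri3)
    also have "\<dots> \<le> 2 * hc \<mu> \<nu> \<delta> (\<delta> + 4) + \<delta>" using h1 h2 pq by (simp add: dist_commute)
    finally have d12: "dist (\<alpha> u1) (\<alpha> u2) \<le> 2 * hc \<mu> \<nu> \<delta> (\<delta> + 4) + \<delta>" .
    have "dist (\<alpha> t) (\<alpha> u1) \<le> \<bar>t - u1\<bar>" using G_lip[OF P, of t u1] u1r u2r by auto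
    also have "\<dots> \<le> u2 - u1" using u1r u2r by auto
    also have "\<dots> \<le> Lc \<mu> \<nu> (dist (\<alpha> u1) (\<alpha> u2))" using G_len[OF P, of u1 u2] u1r u2r by auto
    also have "\<dots> \<le> Lc \<mu> \<nu> (2 * hc \<mu> \<nu> \<delta> (\<delta> + 4) + \<delta>)" using Lc_mono[OF d12] .
    finally have "dist (\<alpha> t) y0 \<le> C1c \<mu> \<nu> \<delta>"
      using \<open>dist (\<alpha> u1) y0 \<le> \<delta> + 4\<close> dist_triangle[of "\<alpha> t" y0 "\<alpha> u1"] unfolding C1c_def by linarith
    then show ?thesis using y0(1) by blast
  qed
qed

end

lemma discrete_ivt_aux:
  fixes k :: "nat \<Rightarrow> int"
  assumes step: "\<forall>i<n. \<bar>k (Suc i) - k i\<bar> \<le> T" and "k 0 < 0" "k n \<ge> 0"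
  shows "\<exists>i\<le>n. \<bar>k i\<bar> \<le> T"
  using assms
proof (induction n)
  case 0 then show ?case by simp
next
  case (Suc n)
  show ?case
  proof (cases "k (Suc n) \<le> T")
    case True then show ?thesis using Suc.prems by (intro exI[of _ "Suc n"]) auto
  next
    case False
    then have "k n \<ge> 0" using Suc.prems(1) by force
    then obtain i where "i \<le> n" "\<bar>k i\<bar> \<le> T" using Suc by auto
    then show ?thesis by (intro exI[of _ i]) auto
  qed
qed

lemma discrete_ivt:
  fixes k :: "nat \<Rightarrow> int"
  assumes step: "\<forall>i<n. \<bar>k (Suc i) - k i\<bar> \<le> T"
    and "(k 0 < 0 \<and> k n > 0) \<or> (k 0 > 0 \<and> k n < 0)"
  shows "\<exists>i\<le>n. \<bar>k i\<bar> \<le> T"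
proof -
  { assume "k 0 > 0 \<and> k n < 0"
    then have "\<exists>i\<le>n. \<bar>- k i\<bar> \<le> T"
      using discrete_ivt_aux[of n "\<lambda>i. - k i" T] step by (auto simp: abs_minus_commute)
    then have ?thesis by simp }
  then show ?thesis using assms discrete_ivt_aux[of n k T] by force
qed

locale PCE = PSys +
  fixes \<delta> :: real and g :: 'g and A :: "('x::metric_space) set"
  assumes ce: "constricting_element G \<phi> \<Gamma> \<delta> g A"
begin

abbreviation gp :: "int \<Rightarrow> 'g" where "gp k \<equiv> g [^]\<^bsub>G\<^esub> k"

lemma g_in: "g \<in> carrier G" using ce unfolding constricting_element_def by auto
lemma g_inf: "\<forall>n::nat. n > 0 \<longrightarrow> g [^]\<^bsub>G\<^esub> n \<noteq> \<one>\<^bsub>G\<^esub>" using ce unfolding constricting_element_def by auto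
lemma A_inv: "\<phi> (gp k) ` A = A" using ce unfolding constricting_element_def by auto
lemma cobdd: "x \<in> A \<Longrightarrow> y \<in> A \<Longrightarrow> \<exists>k::int. dist (\<phi> (gp k) x) y \<le> \<delta>"
  using ce unfolding constricting_element_def by auto

definition \<pi> where "\<pi> = (SOME p. constricting_map \<Gamma> \<delta> A p)"
lemma cmA: "constricting_map \<Gamma> \<delta> A \<pi>"
  using ce someI_ex unfolding constricting_element_def \<pi>_def by metis

definition x0 where "x0 = \<pi> undefined"
lemma x0A: "x0 \<in> A" using cmA unfolding constricting_map_def x0_def by auto

lemma d0: "0 \<le> \<delta>"
proof -
  obtain k where "dist (\<phi> (gp k) x0) x0 \<le> \<delta>" using cobdd[OF x0A x0A] by blast
  then show ?thesis using zero_le_dist[of "\<phi> (gp k) x0" x0] by linarith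
qed

lemma gp_in [simp]: "gp k \<in> carrier G" using group.int_pow_closed[OF grp g_in] by simp

lemma gp_inj: "gp i = gp j \<longleftrightarrow> i = j" using group.pow_inj[OF grp g_in g_inf] by blast

lemma gpA: "a \<in> A \<Longrightarrow> \<phi> (gp k) a \<in> A" using A_inv[of k] by auto

lemma gp_dist: "dist (\<phi> (gp i) x) (\<phi> (gp j) x) = dist x (\<phi> (gp (j - i)) x)"
proof -
  have "gp (j - i) = gp (- i) \<otimes>\<^bsub>G\<^esub> gp j" using group.int_pow_mult[OF grp g_in, of "-i" j] by simp
  then have "\<phi> (gp (j - i)) x = \<phi> (gp (-i)) (\<phi> (gp j) x)" using act_mult by simp
  moreover have "\<phi> (gp (-i)) (\<phi> (gp i) x) = x"
    using act_mult[of "gp (-i)" "gp i" x] group.int_pow_mult[OF grp g_in, of "-i" i] act_one by simp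
  ultimately show ?thesis using isom[of "gp (-i)" "\<phi> (gp i) x" "\<phi> (gp j) x"] by simp
qed

lemma orb_proper: "\<exists>T::nat. \<forall>k::int. dist x0 (\<phi> (gp k) x0) \<le> R \<longrightarrow> \<bar>k\<bar> \<le> T"
proof -
  let ?K = "{k::int. dist x0 (\<phi> (gp k) x0) \<le> R}"
  have "gp ` ?K \<subseteq> {h \<in> carrier G. dist x0 (\<phi> h x0) \<le> R}" by auto
  then have "finite (gp ` ?K)" using proper finite_subset by blast
  moreover have "inj_on gp ?K" using gp_inj by (auto simp: inj_on_def)
  ultimately have fin: "finite ?K" using finite_imageD by blast
  define Mx where "Mx = Max (insert 0 (abs ` ?K))"
  have fin2: "finite (insert 0 (abs ` ?K))" using fin by simp
  have "\<bar>k\<bar> \<le> int (nat Mx)" if kK: "k \<in> ?K" for k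
  proof -
    have "\<bar>k\<bar> \<in> insert 0 (abs ` ?K)" using kK by blast
    then have "\<bar>k\<bar> \<le> Mx" unfolding Mx_def using Max_ge[OF fin2] by blast
    then show ?thesis by linarith
  qed
  then show ?thesis by (intro exI[of _ "nat Mx"]) auto
qed

lemma orb_bdd: "\<exists>D. \<forall>k::int. \<bar>k\<bar> \<le> T \<longrightarrow> dist x0 (\<phi> (gp k) x0) \<le> D"
proof -
  define D where "D = (\<Sum>k\<in>{-T..T}. dist x0 (\<phi> (gp k) x0))"
  have "dist x0 (\<phi> (gp k) x0) \<le> D" if "\<bar>k\<bar> \<le> T" for k
    unfolding D_def by (rule member_le_sum) (use that in auto)
  then show ?thesis by blast
qed

lemma cm_conj:
  assumes u: "u \<in> carrier G"
  shows "constricting_map \<Gamma> \<delta> (\<phi> u ` A) (\<lambda>x. \<phi> u (\<pi> (\<phi> (inv\<^bsub>G\<^esub> u) x)))"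
  unfolding constricting_map_def
proof (intro conjI allI ballI impI)
  have ui: "inv\<^bsub>G\<^esub> u \<in> carrier G" using u grp by simp
  fix x show "\<phi> u (\<pi> (\<phi> (inv\<^bsub>G\<^esub> u) x)) \<in> \<phi> u ` A" using cmA unfolding constricting_map_def by auto
next
  fix x assume "x \<in> \<phi> u ` A"
  then obtain a where a: "a \<in> A" "x = \<phi> u a" by auto
  have "dist x (\<phi> u (\<pi> (\<phi> (inv\<^bsub>G\<^esub> u) x))) = dist a (\<pi> a)" using a act_inv1[OF u] isom[OF u] by simp
  also have "\<dots> \<le> \<delta>" using cmA a unfolding constricting_map_def by auto
  finally show "dist x (\<phi> u (\<pi> (\<phi> (inv\<^bsub>G\<^esub> u) x))) \<le> \<delta>" .
next
  fix x y a b \<alpha>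
  assume H: "(a, b, \<alpha>) \<in> \<Gamma> \<and> \<alpha> a = x \<and> \<alpha> b = y \<and> \<delta> < dist (\<phi> u (\<pi> (\<phi> (inv\<^bsub>G\<^esub> u) x))) (\<phi> u (\<pi> (\<phi> (inv\<^bsub>G\<^esub> u) y)))"
  have ui: "inv\<^bsub>G\<^esub> u \<in> carrier G" using u grp by simp
  define \<beta> where "\<beta> = \<phi> (inv\<^bsub>G\<^esub> u) \<circ> \<alpha>"
  have P: "(a, b, \<beta>) \<in> \<Gamma>" using G_inv[OF _ ui] H unfolding \<beta>_def by blast
  have "\<delta> < dist (\<pi> (\<beta> a)) (\<pi> (\<beta> b))" using H isom[OF u] unfolding \<beta>_def by simp
  then have ex: "(\<exists>t\<in>{a..b}. dist (\<beta> t) (\<pi> (\<beta> a)) \<le> \<delta>) \<and> (\<exists>t\<in>{a..b}. dist (\<beta> t) (\<pi> (\<beta> b)) \<le> \<delta>)"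
    using cm_cs2[OF cmA P] by simp
  have e: "dist (\<alpha> t) (\<phi> u z) = dist (\<beta> t) z" for t z
    using isom[OF u, of "\<beta> t" z] act_inv2[OF u] unfolding \<beta>_def by simp
  show "\<exists>t\<in>{a..b}. dist (\<alpha> t) (\<phi> u (\<pi> (\<phi> (inv\<^bsub>G\<^esub> u) x))) \<le> \<delta>"
    using ex e H unfolding \<beta>_def by auto
  show "\<exists>t\<in>{a..b}. dist (\<alpha> t) (\<phi> u (\<pi> (\<phi> (inv\<^bsub>G\<^esub> u) y))) \<le> \<delta>"
    using ex e H unfolding \<beta>_def by auto
qed

end

context PCE begin

lemma GL: "\<exists>C. \<forall>u\<in>carrier G. finite_hausdorff (\<phi> u ` A) A \<longrightarrow> (\<exists>y\<in>A. dist (\<phi> u x0) y \<le> C)"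
proof -
  define C1 where "C1 = C1c \<mu> \<nu> \<delta>"
  define H1 where "H1 = hc \<mu> \<nu> \<delta> C1"
  define R1 where "R1 = 2 * \<delta> + 2 * H1 + 1"
  obtain T where T: "\<And>k. dist x0 (\<phi> (gp k) x0) \<le> R1 \<Longrightarrow> \<bar>k\<bar> \<le> int T" using orb_proper by blast
  obtain D where D: "\<And>k. \<bar>k\<bar> \<le> int T \<Longrightarrow> dist x0 (\<phi> (gp k) x0) \<le> D" using orb_bdd by blast
  have "\<exists>y\<in>A. dist (\<phi> u x0) y \<le> D + \<delta> + H1 + C1"
    if u: "u \<in> carrier G" and fh: "finite_hausdorff (\<phi> u ` A) A" for u
  proof -
    define B where "B = \<phi> u ` A"
    define \<pi>B where "\<pi>B = (\<lambda>x. \<phi> u (\<pi> (\<phi> (inv\<^bsub>G\<^esub> u) x)))"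
    have cmB: "constricting_map \<Gamma> \<delta> B \<pi>B" unfolding B_def \<pi>B_def using cm_conj[OF u] .
    obtain r where r: "\<And>y. y \<in> B \<Longrightarrow> \<exists>a\<in>A. dist a y \<le> r"
      using fh unfolding finite_hausdorff_def B_def by blast
    define b where "b k = \<phi> u (\<phi> (gp k) x0)" for k
    have bB: "b k \<in> B" for k unfolding b_def B_def using gpA[OF x0A] by auto
    have bd: "dist (b i) (b j) = dist x0 (\<phi> (gp (j - i)) x0)" for i j
      unfolding b_def using isom[OF u] gp_dist by simp
    define hr where "hr = hc \<mu> \<nu> \<delta> r"
    have Bpi: "dist y (\<pi> y) \<le> hr" if yB: "y \<in> B" for y
    proof -
      obtain a where "a \<in> A" "dist a y \<le> r" using r[OF yB] by blast
      then show ?thesis using factP[OF cmA, of a y r] unfolding hr_def by (simp add: dist_commute)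
    qed
    define R2 where "R2 = 2 * \<delta> + hr + hc \<mu> \<nu> \<delta> (\<delta> + hr)"
    define R3 where "R3 = 2 * hr + \<delta>"
    obtain T2 where T2: "\<And>k. dist x0 (\<phi> (gp k) x0) \<le> R2 \<Longrightarrow> \<bar>k\<bar> \<le> int T2" using orb_proper by blast
    obtain T3 where T3: "\<And>k. dist x0 (\<phi> (gp k) x0) \<le> R3 \<Longrightarrow> \<bar>k\<bar> \<le> int T3" using orb_proper by blast
    define K where "K = int (max T2 T3) + 1"
    have "dist (b (-K)) (b K) = dist x0 (\<phi> (gp (2 * K)) x0)" using bd[of "-K" K] by simp
    moreover have "\<not> \<bar>2 * K\<bar> \<le> int T3" unfolding K_def by auto
    ultimately have far: "dist (b (-K)) (b K) > R3" using T3 by force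
    define p where "p = \<pi> (b (-K))"
    define q where "q = \<pi> (b K)"
    have pA: "p \<in> A" and qA: "q \<in> A" using cmA unfolding constricting_map_def p_def q_def by auto
    have bp: "dist (b (-K)) p \<le> hr" and bq: "dist (b K) q \<le> hr" using Bpi bB unfolding p_def q_def by auto
    have "dist (b (-K)) (b K) \<le> dist (b (-K)) p + dist p q + dist q (b K)"
      by (rule dist_tri3)
    then have pq: "dist p q > \<delta>" using far bp bq unfolding R3_def by (simp add: dist_commute)
    obtain a0 b0 \<alpha> where P: "(a0, b0, \<alpha>) \<in> \<Gamma>" "\<alpha> a0 = b (-K)" "\<alpha> b0 = b K" by (rule G_ex)
    have cs: "(\<exists>t\<in>{a0..b0}. dist (\<alpha> t) p \<le> \<delta>) \<and> (\<exists>t\<in>{a0..b0}. dist (\<alpha> t) q \<le> \<delta>)"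
      using cm_cs2[OF cmA P(1)] P(2,3) pq unfolding p_def q_def by simp
    obtain tp where tp: "tp \<in> {a0..b0}" "dist (\<alpha> tp) p \<le> \<delta>" using cs by blast
    obtain tq where tq: "tq \<in> {a0..b0}" "dist (\<alpha> tq) q \<le> \<delta>" using cs by blast
    define lo where "lo = min tp tq"
    define hi where "hi = max tp tq"
    have lohi: "a0 \<le> lo" "lo \<le> hi" "hi \<le> b0" using tp tq unfolding lo_def hi_def by auto
    have Psub: "(lo, hi, \<alpha>) \<in> \<Gamma>" using G_sub[OF P(1) lohi(1) lohi(2) lohi(3)] .
    have elo: "\<exists>s\<in>A. dist (\<alpha> lo) s \<le> \<delta>" using tp tq pA qA unfolding lo_def by (cases "tp \<le> tq") auto
    have ehi: "\<exists>s\<in>A. dist (\<alpha> hi) s \<le> \<delta>" using tp tq pA qA unfolding hi_def by (cases "tp \<le> tq") auto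
    have nearA: "\<exists>y\<in>A. dist (\<alpha> s) y \<le> C1" if "lo \<le> s" "s \<le> hi" for s
      using elo ehi morse[OF cmA Psub _ _ _ _ that] unfolding C1_def by blast
    have nearB: "dist (\<alpha> s) (\<pi>B (\<alpha> s)) \<le> H1" if sab: "a0 \<le> s" "s \<le> b0" for s
    proof -
      have "\<exists>y\<in>B. dist (\<alpha> s) y \<le> C1"
        using morse[OF cmB P(1) bB[of "-K"] _ bB[of K] _ sab] P d0 unfolding C1_def by auto
      then obtain y where "y \<in> B" "dist (\<alpha> s) y \<le> C1" by blast
      then show ?thesis using factP[OF cmB] unfolding H1_def by blast
    qed
    have idx_ex: "\<exists>k. dist (b k) (\<pi>B y) \<le> \<delta>" for y
    proof -
      have "\<pi>B y \<in> B" using cmB unfolding constricting_map_def by auto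
      then obtain a' where a': "a' \<in> A" "\<pi>B y = \<phi> u a'" unfolding B_def by auto
      obtain k where "dist (\<phi> (gp k) x0) a' \<le> \<delta>" using cobdd[OF x0A a'(1)] by blast
      then show ?thesis using a' isom[OF u] unfolding b_def by auto
    qed
    define kk where "kk s = (SOME k. dist (b k) (\<pi>B (\<alpha> s)) \<le> \<delta>)" for s
    have kk: "dist (b (kk s)) (\<pi>B (\<alpha> s)) \<le> \<delta>" for s
      unfolding kk_def using someI_ex[OF idx_ex] .
    have stepb: "\<bar>kk s' - kk s\<bar> \<le> int T" if "lo \<le> s" "s \<le> hi" "lo \<le> s'" "s' \<le> hi" "\<bar>s - s'\<bar> \<le> 1" for s s'
    proof -
      have "dist (\<alpha> s) (\<alpha> s') \<le> \<bar>s - s'\<bar>" using G_lip[OF P(1), of s s'] that lohi by auto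
      moreover have "dist (b (kk s)) (b (kk s')) \<le> dist (b (kk s)) (\<pi>B (\<alpha> s)) + dist (\<pi>B (\<alpha> s)) (\<alpha> s)
          + dist (\<alpha> s) (\<alpha> s') + dist (\<alpha> s') (\<pi>B (\<alpha> s')) + dist (\<pi>B (\<alpha> s')) (b (kk s'))"
        by (rule dist_tri5)
      moreover have "dist (\<pi>B (\<alpha> s)) (\<alpha> s) \<le> H1" "dist (\<alpha> s') (\<pi>B (\<alpha> s')) \<le> H1"
        using nearB[of s] nearB[of s'] that lohi by (auto simp: dist_commute)
      moreover have "dist (\<pi>B (\<alpha> s')) (b (kk s')) \<le> \<delta>" using kk[of s'] by (simp add: dist_commute)
      ultimately have "dist (b (kk s)) (b (kk s')) \<le> R1" using kk[of s] that unfolding R1_def by linarith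
      then show ?thesis using T bd by metis
    qed
    have hr0: "0 \<le> hr" using Bpi[OF bB[of 0]] zero_le_dist order_trans by blast
    have sgn_p: "kk tp < 0"
    proof -
      have "dist (\<alpha> tp) (b (-K)) \<le> \<delta> + hr" using tp bp dist_triangle[of "\<alpha> tp" "b (-K)" p]
        by (simp add: dist_commute)
      then have "dist (\<alpha> tp) (\<pi>B (\<alpha> tp)) \<le> hc \<mu> \<nu> \<delta> (\<delta> + hr)" using factP[OF cmB bB] by blast
      moreover have "dist (b (kk tp)) (b (-K)) \<le> dist (b (kk tp)) (\<pi>B (\<alpha> tp)) + dist (\<pi>B (\<alpha> tp)) (\<alpha> tp) + dist (\<alpha> tp) (b (-K))"
        by (rule dist_tri3)
      ultimately have "dist (b (kk tp)) (b (-K)) \<le> R2" using kk[of tp] \<open>dist (\<alpha> tp) (b (-K)) \<le> \<delta> + hr\<close>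
        unfolding R2_def by (simp add: dist_commute)
      then have "\<bar>-K - kk tp\<bar> \<le> int T2" using T2 bd by metis
      then show ?thesis unfolding K_def by auto
    qed
    have sgn_q: "kk tq > 0"
    proof -
      have "dist (\<alpha> tq) (b K) \<le> \<delta> + hr" using tq bq dist_triangle[of "\<alpha> tq" "b K" q]
        by (simp add: dist_commute)
      then have "dist (\<alpha> tq) (\<pi>B (\<alpha> tq)) \<le> hc \<mu> \<nu> \<delta> (\<delta> + hr)" using factP[OF cmB bB] by blast
      moreover have "dist (b (kk tq)) (b K) \<le> dist (b (kk tq)) (\<pi>B (\<alpha> tq)) + dist (\<pi>B (\<alpha> tq)) (\<alpha> tq) + dist (\<alpha> tq) (b K)"
        by (rule dist_tri3)
      ultimately have "dist (b (kk tq)) (b K) \<le> R2" using kk[of tq] \<open>dist (\<alpha> tq) (b K) \<le> \<delta> + hr\<close>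
        unfolding R2_def by (simp add: dist_commute)
      then have "\<bar>K - kk tq\<bar> \<le> int T2" using T2 bd by metis
      then show ?thesis unfolding K_def by auto
    qed
    define n where "n = nat \<lceil>hi - lo\<rceil>"
    define s where "s i = min (lo + real i) hi" for i :: nat
    have s0: "s 0 = lo" using lohi unfolding s_def by auto
    have sn: "s n = hi" unfolding s_def n_def by (simp add: min_def) linarith
    have sr: "lo \<le> s i" "s i \<le> hi" for i using lohi unfolding s_def by auto
    have sst: "\<bar>s (Suc i) - s i\<bar> \<le> 1" for i unfolding s_def by auto
    define ki where "ki i = kk (s i)" for i
    have steps: "\<forall>i<n. \<bar>ki (Suc i) - ki i\<bar> \<le> int T"
      unfolding ki_def using stepb sr sst by (simp add: abs_minus_commute)
    have ends: "(ki 0 < 0 \<and> ki n > 0) \<or> (ki 0 > 0 \<and> ki n < 0)"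
      unfolding ki_def s0 sn lo_def hi_def using sgn_p sgn_q by (cases "tp \<le> tq") auto
    obtain i where i: "i \<le> n" "\<bar>ki i\<bar> \<le> int T" using discrete_ivt[OF steps ends] by blast
    obtain y where y: "y \<in> A" "dist (\<alpha> (s i)) y \<le> C1" using nearA sr by blast
    have b0: "b 0 = \<phi> u x0" unfolding b_def using act_one by simp
    have "dist (b 0) (b (ki i)) \<le> D" using bd D i by simp
    moreover have "dist (\<phi> u x0) y \<le> dist (b 0) (b (ki i)) + dist (b (ki i)) (\<pi>B (\<alpha> (s i)))
        + dist (\<pi>B (\<alpha> (s i))) (\<alpha> (s i)) + dist (\<alpha> (s i)) y"
      unfolding b0[symmetric] by (rule dist_tri4)
    moreover have "dist (\<pi>B (\<alpha> (s i))) (\<alpha> (s i)) \<le> H1" using nearB[of "s i"] sr lohi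
      by (metis dist_commute order_trans)
    ultimately show ?thesis using kk[of "s i"] y unfolding ki_def by (intro bexI[OF _ y(1)]) linarith
  qed
  then show ?thesis by blast
qed

end

context group begin

lemma cj_mult: "a \<in> carrier G \<Longrightarrow> b \<in> carrier G \<Longrightarrow> y \<in> carrier G \<Longrightarrow>
   (a \<otimes> b) \<otimes> y \<otimes> inv (a \<otimes> b) = a \<otimes> (b \<otimes> y \<otimes> inv b) \<otimes> inv a"
  by (simp add: inv_mult_group m_assoc)

lemma cj_inv: "a \<in> carrier G \<Longrightarrow> y \<in> carrier G \<Longrightarrow> a \<otimes> y \<otimes> inv a = z \<Longrightarrow> inv a \<otimes> z \<otimes> a = y"
  by (auto simp: m_assoc)

lemma cj_one: "a \<in> carrier G \<Longrightarrow> y \<in> carrier G \<Longrightarrow> a \<otimes> y \<otimes> inv a = \<one> \<Longrightarrow> y = \<one>"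
  using cj_inv[of a y \<one>] by simp

end

context PCE begin

abbreviation E where "E \<equiv> elementary_closure G \<phi> A"

lemma E_sub: "u \<in> E \<Longrightarrow> u \<in> carrier G" unfolding elementary_closure_def by auto

lemma E_mult:
  assumes u: "u \<in> E" and v: "v \<in> E" shows "u \<otimes>\<^bsub>G\<^esub> v \<in> E"
proof -
  have uc: "u \<in> carrier G" and vc: "v \<in> carrier G" using u v E_sub by auto
  obtain r where r1: "\<forall>a\<in>A. \<exists>b\<in>\<phi> u ` A. dist a b \<le> r" and r2: "\<forall>b\<in>\<phi> u ` A. \<exists>a\<in>A. dist a b \<le> r"
    using u unfolding elementary_closure_def finite_hausdorff_def by auto
  obtain r' where s1: "\<forall>a\<in>A. \<exists>b\<in>\<phi> v ` A. dist a b \<le> r'" and s2: "\<forall>b\<in>\<phi> v ` A. \<exists>a\<in>A. dist a b \<le> r'"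
    using v unfolding elementary_closure_def finite_hausdorff_def by auto
  have im: "\<phi> (u \<otimes>\<^bsub>G\<^esub> v) ` A = (\<lambda>a. \<phi> u (\<phi> v a)) ` A" using act_mult uc vc by auto
  have "\<forall>a\<in>A. \<exists>b\<in>\<phi> (u \<otimes>\<^bsub>G\<^esub> v) ` A. dist a b \<le> r + r'"
  proof
    fix a assume a: "a \<in> A"
    obtain a1 where a1: "a1 \<in> A" "dist a (\<phi> u a1) \<le> r" using r1 a by auto
    obtain a2 where a2: "a2 \<in> A" "dist a1 (\<phi> v a2) \<le> r'" using s1 a1 by auto
    have "dist (\<phi> u a1) (\<phi> u (\<phi> v a2)) \<le> r'" using a2 isom[OF uc] by simp
    then have "dist a (\<phi> u (\<phi> v a2)) \<le> r + r'" using a1 dist_triangle[of a "\<phi> u (\<phi> v a2)" "\<phi> u a1"] by linarith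
    then show "\<exists>b\<in>\<phi> (u \<otimes>\<^bsub>G\<^esub> v) ` A. dist a b \<le> r + r'" unfolding im using a2 by auto
  qed
  moreover have "\<forall>b\<in>\<phi> (u \<otimes>\<^bsub>G\<^esub> v) ` A. \<exists>a\<in>A. dist a b \<le> r + r'"
  proof
    fix b assume "b \<in> \<phi> (u \<otimes>\<^bsub>G\<^esub> v) ` A"
    then obtain a where a: "a \<in> A" "b = \<phi> u (\<phi> v a)" unfolding im by auto
    obtain a3 where a3: "a3 \<in> A" "dist a3 (\<phi> v a) \<le> r'" using s2 a by auto
    obtain a4 where a4: "a4 \<in> A" "dist a4 (\<phi> u a3) \<le> r" using r2 a3 by auto
    have "dist (\<phi> u a3) b \<le> r'" using a3 isom[OF uc] a(2) by simp
    then have "dist a4 b \<le> r + r'" using a4 a dist_triangle[of a4 b "\<phi> u a3"] by linarith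
    then show "\<exists>a\<in>A. dist a b \<le> r + r'" using a4 by auto
  qed
  ultimately show ?thesis using uc vc grp unfolding elementary_closure_def finite_hausdorff_def
    by (auto intro: group.subgroupE monoid.m_closed[OF group.is_monoid[OF grp]])
qed

lemma E_inv:
  assumes u: "u \<in> E" shows "inv\<^bsub>G\<^esub> u \<in> E"
proof -
  have uc: "u \<in> carrier G" using u E_sub by auto
  have ui: "inv\<^bsub>G\<^esub> u \<in> carrier G" using uc grp by simp
  obtain r where r1: "\<forall>a\<in>A. \<exists>b\<in>\<phi> u ` A. dist a b \<le> r" and r2: "\<forall>b\<in>\<phi> u ` A. \<exists>a\<in>A. dist a b \<le> r"
    using u unfolding elementary_closure_def finite_hausdorff_def by auto
  have "\<forall>a\<in>A. \<exists>b\<in>\<phi> (inv\<^bsub>G\<^esub> u) ` A. dist a b \<le> r"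
  proof
    fix a assume a: "a \<in> A"
    obtain a' where a': "a' \<in> A" "dist a' (\<phi> u a) \<le> r" using r2 a by auto
    have "dist (\<phi> (inv\<^bsub>G\<^esub> u) a') a \<le> r" using a' isom[OF ui, of a' "\<phi> u a"] act_inv1[OF uc] by simp
    then show "\<exists>b\<in>\<phi> (inv\<^bsub>G\<^esub> u) ` A. dist a b \<le> r" using a' by (auto simp: dist_commute)
  qed
  moreover have "\<forall>b\<in>\<phi> (inv\<^bsub>G\<^esub> u) ` A. \<exists>a\<in>A. dist a b \<le> r"
  proof
    fix b assume "b \<in> \<phi> (inv\<^bsub>G\<^esub> u) ` A"
    then obtain a where a: "a \<in> A" "b = \<phi> (inv\<^bsub>G\<^esub> u) a" by auto
    obtain a'' where a'': "a'' \<in> A" "dist a (\<phi> u a'') \<le> r" using r1 a by auto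
    have "dist b a'' \<le> r" using a a'' isom[OF ui, of a "\<phi> u a''"] act_inv1[OF uc] by simp
    then show "\<exists>a\<in>A. dist a b \<le> r" using a'' by (auto simp: dist_commute)
  qed
  ultimately show ?thesis using ui unfolding elementary_closure_def finite_hausdorff_def by auto
qed

lemma E_gp: "gp k \<in> E"
proof -
  have "finite_hausdorff (\<phi> (gp k) ` A) A" unfolding A_inv finite_hausdorff_def
    by (intro exI[of _ 0]) auto
  then show ?thesis unfolding elementary_closure_def by simp
qed

lemma E_cj: "u \<in> E \<Longrightarrow> x \<in> E \<Longrightarrow> u \<otimes>\<^bsub>G\<^esub> x \<otimes>\<^bsub>G\<^esub> inv\<^bsub>G\<^esub> u \<in> E"
  using E_mult E_inv by blast

lemma E_pow: "u \<in> E \<Longrightarrow> u [^]\<^bsub>G\<^esub> (j::nat) \<in> E"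
proof (induction j)
  case 0
  have "\<one>\<^bsub>G\<^esub> = gp 0" by simp
  then show ?case using E_gp[of 0] by simp
next
  case (Suc j)
  then show ?case using E_mult[OF Suc.IH Suc.prems] by (simp add: grp group.is_monoid)
qed

end

context group begin

lemma diff_aux: "a \<in> carrier G \<Longrightarrow> b \<in> carrier G \<Longrightarrow> f \<in> carrier G \<Longrightarrow>
   (b \<otimes> f) \<otimes> inv (a \<otimes> f) = b \<otimes> inv a"
  by (simp add: inv_mult_group m_assoc)

end

context PCE begin

lemma gp_add: "gp (a + b) = gp a \<otimes>\<^bsub>G\<^esub> gp b"
  using group.int_pow_mult[OF grp g_in] by blast

lemma act_gp_add: "\<phi> (gp (a + b)) x = \<phi> (gp a) (\<phi> (gp b) x)"
  using gp_add act_mult by simp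

lemma cj_pow_gp:
  assumes u: "u \<in> carrier G" and e: "u \<otimes>\<^bsub>G\<^esub> gp m \<otimes>\<^bsub>G\<^esub> inv\<^bsub>G\<^esub> u = gp n"
  shows "u \<otimes>\<^bsub>G\<^esub> gp (m * q) \<otimes>\<^bsub>G\<^esub> inv\<^bsub>G\<^esub> u = gp (n * q)"
proof -
  have "gp (m * q) = (gp m) [^]\<^bsub>G\<^esub> q" using group.int_pow_pow[OF grp g_in] by simp
  then have "u \<otimes>\<^bsub>G\<^esub> gp (m * q) \<otimes>\<^bsub>G\<^esub> inv\<^bsub>G\<^esub> u = (gp n) [^]\<^bsub>G\<^esub> q"
    using group.conj_int_pow[OF grp u gp_in[of m], of q] e by simp
  then show ?thesis using group.int_pow_pow[OF grp g_in] by simp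
qed

lemma n_nz:
  assumes u: "u \<in> carrier G" and e: "u \<otimes>\<^bsub>G\<^esub> gp m \<otimes>\<^bsub>G\<^esub> inv\<^bsub>G\<^esub> u = gp n" and m: "m \<noteq> 0"
  shows "n \<noteq> 0"
proof
  assume "n = 0"
  then have "gp m = \<one>\<^bsub>G\<^esub>" using group.cj_one[OF grp u gp_in[of m]] e by simp
  then have "gp m = gp 0" by simp
  then show False using gp_inj m by blast
qed

lemma fin_index: "\<exists>F. finite F \<and> F \<subseteq> carrier G \<and> (\<forall>e\<in>E. \<exists>k f. f \<in> F \<and> e = gp k \<otimes>\<^bsub>G\<^esub> f)"
proof -
  obtain C where C: "\<forall>u\<in>carrier G. finite_hausdorff (\<phi> u ` A) A \<longrightarrow> (\<exists>y\<in>A. dist (\<phi> u x0) y \<le> C)"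
    using GL by blast
  define F where "F = {h \<in> carrier G. dist x0 (\<phi> h x0) \<le> C + \<delta>}"
  have "\<exists>k f. f \<in> F \<and> e = gp k \<otimes>\<^bsub>G\<^esub> f" if e: "e \<in> E" for e
  proof -
    have ec: "e \<in> carrier G" and fh: "finite_hausdorff (\<phi> e ` A) A"
      using e unfolding elementary_closure_def by auto
    obtain y where y: "y \<in> A" "dist (\<phi> e x0) y \<le> C" using C ec fh by blast
    obtain k where k: "dist (\<phi> (gp k) x0) y \<le> \<delta>" using cobdd[OF x0A y(1)] by blast
    define f where "f = gp (-k) \<otimes>\<^bsub>G\<^esub> e"
    have fc: "f \<in> carrier G" unfolding f_def using ec grp by (simp add: group.is_monoid monoid.m_closed)
    have "gp k \<otimes>\<^bsub>G\<^esub> f = (gp k \<otimes>\<^bsub>G\<^esub> gp (-k)) \<otimes>\<^bsub>G\<^esub> e"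
      unfolding f_def using ec grp by (simp add: group.is_monoid monoid.m_assoc)
    also have "\<dots> = e" using gp_add[of k "-k", symmetric] ec grp by (simp add: group.is_monoid)
    finally have ef: "e = gp k \<otimes>\<^bsub>G\<^esub> f" by simp
    have "dist x0 (\<phi> f x0) = dist (\<phi> (gp k) x0) (\<phi> (gp k) (\<phi> f x0))" using isom by simp
    also have "\<dots> = dist (\<phi> (gp k) x0) (\<phi> e x0)" using ef act_mult[OF gp_in fc] by simp
    also have "\<dots> \<le> \<delta> + C" using k y dist_triangle[of "\<phi> (gp k) x0" "\<phi> e x0" y]
      by (simp add: dist_commute)
    finally have "f \<in> F" unfolding F_def using fc by simp
    then show ?thesis using ef by blast
  qed
  moreover have "finite F" unfolding F_def using proper .
  ultimately show ?thesis unfolding F_def by blast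
qed

lemma PH: "\<exists>N::nat. \<forall>u\<in>E. \<exists>m::int. 1 \<le> m \<and> m \<le> int N \<and> (\<exists>n. u \<otimes>\<^bsub>G\<^esub> gp m \<otimes>\<^bsub>G\<^esub> inv\<^bsub>G\<^esub> u = gp n)"
proof -
  obtain F where F: "finite F" "F \<subseteq> carrier G" "\<forall>e\<in>E. \<exists>k f. f \<in> F \<and> e = gp k \<otimes>\<^bsub>G\<^esub> f"
    using fin_index by blast
  define N where "N = card F"
  have "\<exists>m::int. 1 \<le> m \<and> m \<le> int N \<and> (\<exists>n. u \<otimes>\<^bsub>G\<^esub> gp m \<otimes>\<^bsub>G\<^esub> inv\<^bsub>G\<^esub> u = gp n)" if u: "u \<in> E" for u
  proof -
    have uc: "u \<in> carrier G" using u E_sub by auto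
    define h where "h = u \<otimes>\<^bsub>G\<^esub> g \<otimes>\<^bsub>G\<^esub> inv\<^bsub>G\<^esub> u"
    have hc: "h \<in> carrier G" unfolding h_def using uc g_in grp by (simp add: group.is_monoid monoid.m_closed)
    have hp: "u \<otimes>\<^bsub>G\<^esub> gp i \<otimes>\<^bsub>G\<^esub> inv\<^bsub>G\<^esub> u = h [^]\<^bsub>G\<^esub> i" for i
      unfolding h_def using group.conj_int_pow[OF grp uc g_in] by blast
    have hE: "h [^]\<^bsub>G\<^esub> (i::int) \<in> E" for i using E_cj[OF u E_gp[of i]] hp by simp
    have ex: "\<exists>f. f \<in> F \<and> (\<exists>k. h [^]\<^bsub>G\<^esub> (int i) = gp k \<otimes>\<^bsub>G\<^esub> f)" for i
      using F(3) hE by blast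
    define fi where "fi i = (SOME f. f \<in> F \<and> (\<exists>k. h [^]\<^bsub>G\<^esub> (int i) = gp k \<otimes>\<^bsub>G\<^esub> f))" for i
    have fi: "fi i \<in> F \<and> (\<exists>k. h [^]\<^bsub>G\<^esub> (int i) = gp k \<otimes>\<^bsub>G\<^esub> fi i)" for i
      unfolding fi_def using someI_ex[OF ex[of i]] .
    have "\<not> inj_on fi {0..N}"
    proof
      assume "inj_on fi {0..N}"
      then have "card {0..N} \<le> card F" using card_inj_on_le[of fi "{0..N}" F] fi F(1) by auto
      then show False unfolding N_def by simp
    qed
    then obtain i j where ij: "i \<in> {0..N}" "j \<in> {0..N}" "i \<noteq> j" "fi i = fi j"
      unfolding inj_on_def by blast
    have key: "\<exists>m::int. 1 \<le> m \<and> m \<le> int N \<and> (\<exists>n. u \<otimes>\<^bsub>G\<^esub> gp m \<otimes>\<^bsub>G\<^esub> inv\<^bsub>G\<^esub> u = gp n)"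
      if ij': "i < j" "j \<le> N" "fi i = fi j" for i j
    proof -
      obtain ki where ki: "h [^]\<^bsub>G\<^esub> (int i) = gp ki \<otimes>\<^bsub>G\<^esub> fi i" using fi by blast
      obtain kj where kj: "h [^]\<^bsub>G\<^esub> (int j) = gp kj \<otimes>\<^bsub>G\<^esub> fi i" using fi ij'(3) by metis
      have fc: "fi i \<in> carrier G" using fi F(2) by blast
      have "h [^]\<^bsub>G\<^esub> (int j - int i) = h [^]\<^bsub>G\<^esub> (int j) \<otimes>\<^bsub>G\<^esub> inv\<^bsub>G\<^esub> (h [^]\<^bsub>G\<^esub> (int i))"
        using group.int_pow_diff[OF grp hc] by blast
      also have "\<dots> = gp kj \<otimes>\<^bsub>G\<^esub> inv\<^bsub>G\<^esub> (gp ki)"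
        unfolding ki kj using group.diff_aux[OF grp gp_in gp_in fc] by blast
      also have "\<dots> = gp (kj - ki)" using group.int_pow_diff[OF grp g_in] by simp
      finally have "u \<otimes>\<^bsub>G\<^esub> gp (int j - int i) \<otimes>\<^bsub>G\<^esub> inv\<^bsub>G\<^esub> u = gp (kj - ki)" using hp by simp
      then show ?thesis using ij' by (intro exI[of _ "int j - int i"]) auto
    qed
    show ?thesis
    proof (cases "i < j")
      case True then show ?thesis using key ij by auto
    next
      case False then show ?thesis using key[of j i] ij by auto
    qed
  qed
  then show ?thesis by blast
qed

end

lemma pow_growth_contra:
  fixes m n :: int and N :: nat
  assumes m: "1 \<le> m" and nm: "m < n" and H: "\<forall>j::nat. n ^ j \<le> int N * m ^ j"
  shows False
proof -
  define x where "x = real_of_int m"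
  have x0: "x > 0" using m unfolding x_def by simp
  define j where "j = N * nat m"
  have "0 \<le> 1 / x" using x0 by simp
  then have "1 + real j * (1 / x) \<le> (1 + 1 / x) ^ j"
    by (intro Bernoulli_inequality) linarith
  moreover have "real j * (1 / x) = real N" unfolding j_def x_def using m by simp
  ultimately have b: "1 + real N \<le> (1 + 1/x) ^ j" by simp
  have "(x + 1) ^ j = x ^ j * (1 + 1/x) ^ j"
    using x0 by (simp add: power_mult_distrib[symmetric] field_simps)
  also have "\<dots> \<ge> x ^ j * (1 + real N)" using b x0 by (simp add: mult_left_mono)
  finally have g1: "x ^ j * (1 + real N) \<le> (x + 1) ^ j" .
  have "(x + 1) ^ j \<le> real_of_int n ^ j"
    using nm x0 unfolding x_def by (intro power_mono) auto
  also have "\<dots> \<le> real N * x ^ j"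
  proof -
    have "n ^ j \<le> int N * m ^ j" using H by blast
    then have "real_of_int (n ^ j) \<le> real_of_int (int N * m ^ j)" by (simp only: of_int_le_iff)
    then show ?thesis unfolding x_def by simp
  qed
  finally have "x ^ j * (1 + real N) \<le> real N * x ^ j" using g1 by linarith
  moreover have "x ^ j > 0" using x0 by simp
  ultimately show False by (simp add: algebra_simps)
qed

context PCE begin

lemma pow_rel:
  assumes u: "u \<in> carrier G" and e: "u \<otimes>\<^bsub>G\<^esub> gp m \<otimes>\<^bsub>G\<^esub> inv\<^bsub>G\<^esub> u = gp n"
  shows "u [^]\<^bsub>G\<^esub> (j::nat) \<otimes>\<^bsub>G\<^esub> gp (m ^ j) \<otimes>\<^bsub>G\<^esub> inv\<^bsub>G\<^esub> (u [^]\<^bsub>G\<^esub> j) = gp (n ^ j)"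
proof (induction j)
  case 0
  have "gp 1 \<in> carrier G" by simp
  then show ?case using grp
    by (simp add: monoid.inv_one[OF group.is_monoid[OF grp]] monoid.l_one[OF group.is_monoid[OF grp]] monoid.r_one[OF group.is_monoid[OF grp]])
next
  case (Suc j)
  have uj: "u [^]\<^bsub>G\<^esub> j \<in> carrier G" using u grp by (simp add: group.is_monoid monoid.nat_pow_closed)
  have "u [^]\<^bsub>G\<^esub> Suc j = u [^]\<^bsub>G\<^esub> j \<otimes>\<^bsub>G\<^esub> u" using grp by (simp add: group.is_monoid monoid.nat_pow_Suc)
  then have "u [^]\<^bsub>G\<^esub> Suc j \<otimes>\<^bsub>G\<^esub> gp (m ^ Suc j) \<otimes>\<^bsub>G\<^esub> inv\<^bsub>G\<^esub> (u [^]\<^bsub>G\<^esub> Suc j)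
      = u [^]\<^bsub>G\<^esub> j \<otimes>\<^bsub>G\<^esub> (u \<otimes>\<^bsub>G\<^esub> gp (m * m ^ j) \<otimes>\<^bsub>G\<^esub> inv\<^bsub>G\<^esub> u) \<otimes>\<^bsub>G\<^esub> inv\<^bsub>G\<^esub> (u [^]\<^bsub>G\<^esub> j)"
    using group.cj_mult[OF grp uj u gp_in] by simp
  also have "\<dots> = u [^]\<^bsub>G\<^esub> j \<otimes>\<^bsub>G\<^esub> gp (m ^ j * n) \<otimes>\<^bsub>G\<^esub> inv\<^bsub>G\<^esub> (u [^]\<^bsub>G\<^esub> j)"
    using cj_pow_gp[OF u e, of "m ^ j"] by (simp add: mult.commute)
  also have "\<dots> = gp (n ^ j * n)" using cj_pow_gp[OF uj Suc.IH, of n] .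
  finally show ?case by (simp add: mult.commute)
qed

lemma ratio_le:
  assumes u: "u \<in> E" and m: "1 \<le> m" and e: "u \<otimes>\<^bsub>G\<^esub> gp m \<otimes>\<^bsub>G\<^esub> inv\<^bsub>G\<^esub> u = gp n"
  shows "\<bar>n\<bar> \<le> m"
proof (rule ccontr)
  assume nm: "\<not> \<bar>n\<bar> \<le> m"
  obtain N where N: "\<forall>u\<in>E. \<exists>m::int. 1 \<le> m \<and> m \<le> int N \<and> (\<exists>n. u \<otimes>\<^bsub>G\<^esub> gp m \<otimes>\<^bsub>G\<^esub> inv\<^bsub>G\<^esub> u = gp n)"
    using PH by blast
  have r1: "\<bar>n'\<bar> \<le> int N * m'"
    if v: "v \<in> E" and m': "1 \<le> m'" and e': "v \<otimes>\<^bsub>G\<^esub> gp m' \<otimes>\<^bsub>G\<^esub> inv\<^bsub>G\<^esub> v = gp n'" for v m' n'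
  proof -
    have vc: "v \<in> carrier G" using v E_sub by auto
    have vi: "inv\<^bsub>G\<^esub> v \<in> carrier G" using vc grp by simp
    obtain m'' n'' where mm: "1 \<le> m''" "m'' \<le> int N"
      and e'': "inv\<^bsub>G\<^esub> v \<otimes>\<^bsub>G\<^esub> gp m'' \<otimes>\<^bsub>G\<^esub> inv\<^bsub>G\<^esub> (inv\<^bsub>G\<^esub> v) = gp n''"
      using N E_inv[OF v] by blast
    have nn: "n'' \<noteq> 0" using n_nz[OF vi e''] mm by auto
    have "inv\<^bsub>G\<^esub> (inv\<^bsub>G\<^esub> v) \<otimes>\<^bsub>G\<^esub> gp n'' \<otimes>\<^bsub>G\<^esub> inv\<^bsub>G\<^esub> v = gp m''"
      using group.cj_inv[OF grp vi gp_in e''] vc grp by simp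
    then have b: "v \<otimes>\<^bsub>G\<^esub> gp n'' \<otimes>\<^bsub>G\<^esub> inv\<^bsub>G\<^esub> v = gp m''" using vc grp by simp
    have "gp (m'' * m') = gp (n' * n'')"
      using cj_pow_gp[OF vc b, of m'] cj_pow_gp[OF vc e', of n''] by (simp add: mult.commute)
    then have eq: "m'' * m' = n' * n''" using gp_inj by blast
    have "1 \<le> \<bar>n''\<bar>" using nn by simp
    then have "\<bar>n'\<bar> * 1 \<le> \<bar>n'\<bar> * \<bar>n''\<bar>" by (intro mult_left_mono) simp_all
    then have a1: "\<bar>n'\<bar> \<le> \<bar>n'\<bar> * \<bar>n''\<bar>" by simp
    have a2: "\<bar>n'\<bar> * \<bar>n''\<bar> = \<bar>m'' * m'\<bar>" using eq by (simp add: abs_mult)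
    have a3: "\<bar>m'' * m'\<bar> = m'' * m'" using mm m' by simp
    have a4: "m'' * m' \<le> int N * m'" using mm m' by (simp add: mult_right_mono)
    show ?thesis using a1 a2 a3 a4 by linarith
  qed
  have uc: "u \<in> carrier G" using u E_sub by auto
  have H: "\<forall>j::nat. \<bar>n\<bar> ^ j \<le> int N * m ^ j"
  proof
    fix j :: nat
    have "\<bar>n ^ j\<bar> \<le> int N * m ^ j"
      using r1[OF E_pow[OF u] _ pow_rel[OF uc e, of j]] m by simp
    then show "\<bar>n\<bar> ^ j \<le> int N * m ^ j" by (simp add: power_abs)
  qed
  have "m < \<bar>n\<bar>" using nm by simp
  from pow_growth_contra[OF m this H] show False .
qed

lemma abs_eq:
  assumes u: "u \<in> E" and m: "1 \<le> m" and e: "u \<otimes>\<^bsub>G\<^esub> gp m \<otimes>\<^bsub>G\<^esub> inv\<^bsub>G\<^esub> u = gp n"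
  shows "\<bar>n\<bar> = m"
proof -
  have uc: "u \<in> carrier G" using u E_sub by auto
  have ui: "inv\<^bsub>G\<^esub> u \<in> E" using E_inv[OF u] .
  have uic: "inv\<^bsub>G\<^esub> u \<in> carrier G" using uc grp by simp
  have le1: "\<bar>n\<bar> \<le> m" using ratio_le[OF u m e] .
  have nz: "n \<noteq> 0" using n_nz[OF uc e] m by auto
  have ei: "inv\<^bsub>G\<^esub> u \<otimes>\<^bsub>G\<^esub> gp n \<otimes>\<^bsub>G\<^esub> inv\<^bsub>G\<^esub> (inv\<^bsub>G\<^esub> u) = gp m"
    using group.cj_inv[OF grp uc gp_in e] uc grp by simp
  have "m \<le> \<bar>n\<bar>"
  proof (cases "n > 0")
    case True
    then show ?thesis using ratio_le[OF ui _ ei] by simp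
  next
    case False
    then have "n < 0" using nz by simp
    moreover have "inv\<^bsub>G\<^esub> u \<otimes>\<^bsub>G\<^esub> gp (n * -1) \<otimes>\<^bsub>G\<^esub> inv\<^bsub>G\<^esub> (inv\<^bsub>G\<^esub> u) = gp (m * -1)"
      using cj_pow_gp[OF uic ei] .
    ultimately show ?thesis using ratio_le[OF ui, of "n * -1" "m * -1"] by simp
  qed
  then show ?thesis using le1 by simp
qed

end

lemma (in group) cj_back: "u \<in> carrier G \<Longrightarrow> x \<in> carrier G \<Longrightarrow> u \<otimes> x \<otimes> inv u \<otimes> u = u \<otimes> x"
  by (simp add: m_assoc)

context PCE begin

lemma conj_swap:
  assumes u: "u \<in> carrier G" and e: "u \<otimes>\<^bsub>G\<^esub> gp m \<otimes>\<^bsub>G\<^esub> inv\<^bsub>G\<^esub> u = gp n"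
  shows "\<phi> u (\<phi> (gp m) z) = \<phi> (gp n) (\<phi> u z)"
proof -
  have "gp n \<otimes>\<^bsub>G\<^esub> u = u \<otimes>\<^bsub>G\<^esub> gp m"
    using e group.cj_back[OF grp u gp_in, of m] by simp
  then show ?thesis using act_mult[OF gp_in u] act_mult[OF u gp_in] by metis
qed

lemma III_imp_I:
  assumes u: "u \<in> carrier G" and m: "m \<noteq> 0" and n: "n \<noteq> 0"
    and e: "u \<otimes>\<^bsub>G\<^esub> gp m \<otimes>\<^bsub>G\<^esub> inv\<^bsub>G\<^esub> u = gp n"
  shows "u \<in> E"
proof -
  obtain Dn where Dn: "\<And>k. \<bar>k\<bar> \<le> int (nat \<bar>n\<bar>) \<Longrightarrow> dist x0 (\<phi> (gp k) x0) \<le> Dn" using orb_bdd by blast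
  obtain Dm where Dm: "\<And>k. \<bar>k\<bar> \<le> int (nat \<bar>m\<bar>) \<Longrightarrow> dist x0 (\<phi> (gp k) x0) \<le> Dm" using orb_bdd by blast
  define Dd where "Dd = dist x0 (\<phi> u x0)"
  have sw: "\<phi> u (\<phi> (gp (m * q)) z) = \<phi> (gp (n * q)) (\<phi> u z)" for q z
    using conj_swap[OF u cj_pow_gp[OF u e]] .
  have split: "dist (\<phi> (gp k) x0) (\<phi> (gp (l * (k div l))) x0) \<le> D"
    if "l \<noteq> 0" "\<And>k. \<bar>k\<bar> \<le> int (nat \<bar>l\<bar>) \<Longrightarrow> dist x0 (\<phi> (gp k) x0) \<le> D" for k l D
  proof -
    have k: "k = l * (k div l) + k mod l" by simp
    have "\<bar>k mod l\<bar> < \<bar>l\<bar>" using abs_mod_less that(1) by blast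
    then have "dist x0 (\<phi> (gp (k mod l)) x0) \<le> D" using that(2) by simp
    moreover have "\<phi> (gp k) x0 = \<phi> (gp (l * (k div l))) (\<phi> (gp (k mod l)) x0)"
      using act_gp_add[of "l * (k div l)" "k mod l" x0] k by simp
    ultimately show ?thesis using isom[OF gp_in] by (simp add: dist_commute)
  qed
  have h1: "\<forall>a\<in>A. \<exists>b\<in>\<phi> u ` A. dist a b \<le> \<delta> + Dn + Dd"
  proof
    fix a assume a: "a \<in> A"
    obtain k where k: "dist (\<phi> (gp k) x0) a \<le> \<delta>" using cobdd[OF x0A a] by blast
    define q where "q = k div n"
    have d1: "dist (\<phi> (gp k) x0) (\<phi> (gp (n * q)) x0) \<le> Dn" unfolding q_def using split[OF n Dn] .
    have d2: "dist (\<phi> (gp (n * q)) x0) (\<phi> u (\<phi> (gp (m * q)) x0)) = Dd"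
      unfolding sw Dd_def using isom[OF gp_in] by simp
    have "\<phi> u (\<phi> (gp (m * q)) x0) \<in> \<phi> u ` A" using gpA[OF x0A] by auto
    moreover have "dist a (\<phi> u (\<phi> (gp (m * q)) x0)) \<le> \<delta> + Dn + Dd"
      using k d1 d2 dist_triangle[of a "\<phi> u (\<phi> (gp (m * q)) x0)" "\<phi> (gp k) x0"]
        dist_triangle[of "\<phi> (gp k) x0" "\<phi> u (\<phi> (gp (m * q)) x0)" "\<phi> (gp (n * q)) x0"]
      by (simp add: dist_commute)
    ultimately show "\<exists>b\<in>\<phi> u ` A. dist a b \<le> \<delta> + Dn + Dd" by blast
  qed
  moreover have h2: "\<forall>b\<in>\<phi> u ` A. \<exists>a\<in>A. dist a b \<le> \<delta> + Dm + Dd"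
  proof
    fix b assume "b \<in> \<phi> u ` A"
    then obtain a where a: "a \<in> A" "b = \<phi> u a" by auto
    obtain k where k: "dist (\<phi> (gp k) x0) a \<le> \<delta>" using cobdd[OF x0A a(1)] by blast
    define q where "q = k div m"
    have d0: "dist (\<phi> u (\<phi> (gp k) x0)) b \<le> \<delta>" using k a isom[OF u] by simp
    have d1: "dist (\<phi> u (\<phi> (gp k) x0)) (\<phi> u (\<phi> (gp (m * q)) x0)) \<le> Dm"
      unfolding q_def using split[OF m Dm] isom[OF u] by simp
    have d2: "dist (\<phi> u (\<phi> (gp (m * q)) x0)) (\<phi> (gp (n * q)) x0) = Dd"
      unfolding sw Dd_def using isom[OF gp_in] by (simp add: dist_commute)
    have "\<phi> (gp (n * q)) x0 \<in> A" using gpA[OF x0A] by auto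
    moreover have "dist (\<phi> (gp (n * q)) x0) b \<le> \<delta> + Dm + Dd"
      using d0 d1 d2 dist_triangle[of "\<phi> (gp (n * q)) x0" b "\<phi> u (\<phi> (gp k) x0)"]
        dist_triangle[of "\<phi> (gp (n * q)) x0" "\<phi> u (\<phi> (gp k) x0)" "\<phi> u (\<phi> (gp (m * q)) x0)"]
      by (simp add: dist_commute)
    ultimately show "\<exists>a\<in>A. dist a b \<le> \<delta> + Dm + Dd" by blast
  qed
  define r where "r = \<delta> + max Dn Dm + Dd"
  have "\<forall>a\<in>A. \<exists>b\<in>\<phi> u ` A. dist a b \<le> r"
  proof
    fix a assume "a \<in> A"
    then obtain b where "b \<in> \<phi> u ` A" "dist a b \<le> \<delta> + Dn + Dd" using h1 by blast
    moreover have "\<delta> + Dn + Dd \<le> r" unfolding r_def by simp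
    ultimately show "\<exists>b\<in>\<phi> u ` A. dist a b \<le> r" by (intro bexI[of _ b]) auto
  qed
  moreover have "\<forall>b\<in>\<phi> u ` A. \<exists>a\<in>A. dist a b \<le> r"
  proof
    fix b assume "b \<in> \<phi> u ` A"
    then obtain a where "a \<in> A" "dist a b \<le> \<delta> + Dm + Dd" using h2 by blast
    moreover have "\<delta> + Dm + Dd \<le> r" unfolding r_def by simp
    ultimately show "\<exists>a\<in>A. dist a b \<le> r" by (intro bexI[of _ a]) auto
  qed
  ultimately have "finite_hausdorff (\<phi> u ` A) A"
    unfolding finite_hausdorff_def by blast
  then show ?thesis using u unfolding elementary_closure_def by auto
qed

lemma coset_char:
  assumes a: "a \<in> carrier G" and p: "p \<in> {-1, 1::int}"
    and e: "a \<otimes>\<^bsub>G\<^esub> gp M \<otimes>\<^bsub>G\<^esub> inv\<^bsub>G\<^esub> a = gp (p * M)"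
  shows "(\<Union>h\<in>{u \<in> carrier G. u \<otimes>\<^bsub>G\<^esub> gp M \<otimes>\<^bsub>G\<^esub> inv\<^bsub>G\<^esub> u = gp M}. {h \<otimes>\<^bsub>G\<^esub> a})
       = {x \<in> carrier G. x \<otimes>\<^bsub>G\<^esub> gp M \<otimes>\<^bsub>G\<^esub> inv\<^bsub>G\<^esub> x = gp (p * M)}"
proof -
  define U where "U = (\<Union>h\<in>{u \<in> carrier G. u \<otimes>\<^bsub>G\<^esub> gp M \<otimes>\<^bsub>G\<^esub> inv\<^bsub>G\<^esub> u = gp M}. {h \<otimes>\<^bsub>G\<^esub> a})"
  define S where "S = {x \<in> carrier G. x \<otimes>\<^bsub>G\<^esub> gp M \<otimes>\<^bsub>G\<^esub> inv\<^bsub>G\<^esub> x = gp (p * M)}"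
  have pp: "p * p = 1" using p by auto
  have L1: "x \<in> S" if xU: "x \<in> U" for x
  proof -
    obtain h where h: "h \<in> carrier G" "h \<otimes>\<^bsub>G\<^esub> gp M \<otimes>\<^bsub>G\<^esub> inv\<^bsub>G\<^esub> h = gp M" "x = h \<otimes>\<^bsub>G\<^esub> a"
      using xU unfolding U_def by auto
    have xc: "x \<in> carrier G" using h a grp by (simp add: group.is_monoid monoid.m_closed)
    have "x \<otimes>\<^bsub>G\<^esub> gp M \<otimes>\<^bsub>G\<^esub> inv\<^bsub>G\<^esub> x = h \<otimes>\<^bsub>G\<^esub> gp (M * p) \<otimes>\<^bsub>G\<^esub> inv\<^bsub>G\<^esub> h"
      using group.cj_mult[OF grp h(1) a gp_in, of M] e h(3) by (simp add: mult.commute)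
    also have "\<dots> = gp (M * p)" using cj_pow_gp[OF h(1) h(2), of p] .
    finally show ?thesis unfolding S_def using xc by (simp add: mult.commute)
  qed
  have L2: "x \<in> U" if xS: "x \<in> S" for x
  proof -
    have xc: "x \<in> carrier G" and ex: "x \<otimes>\<^bsub>G\<^esub> gp M \<otimes>\<^bsub>G\<^esub> inv\<^bsub>G\<^esub> x = gp (p * M)"
      using xS unfolding S_def by auto
    have ai: "inv\<^bsub>G\<^esub> a \<in> carrier G" using a grp by simp
    define h where "h = x \<otimes>\<^bsub>G\<^esub> inv\<^bsub>G\<^esub> a"
    have hc: "h \<in> carrier G" unfolding h_def using xc ai grp by (simp add: group.is_monoid monoid.m_closed)
    have xh: "x = h \<otimes>\<^bsub>G\<^esub> a" unfolding h_def using xc a ai grp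
      by (simp add: group.is_monoid monoid.m_assoc group.l_inv[OF grp] monoid.r_one[OF group.is_monoid[OF grp]])
    have e1: "inv\<^bsub>G\<^esub> a \<otimes>\<^bsub>G\<^esub> gp (p * M) \<otimes>\<^bsub>G\<^esub> inv\<^bsub>G\<^esub> (inv\<^bsub>G\<^esub> a) = gp M"
      using group.cj_inv[OF grp a gp_in e] a grp by simp
    have pMp: "p * M * p = M" using pp by (metis mult.assoc mult.commute mult.left_neutral)
    have "inv\<^bsub>G\<^esub> a \<otimes>\<^bsub>G\<^esub> gp (p * M * p) \<otimes>\<^bsub>G\<^esub> inv\<^bsub>G\<^esub> (inv\<^bsub>G\<^esub> a) = gp (M * p)"
      using cj_pow_gp[OF ai e1, of p] .
    then have e2: "inv\<^bsub>G\<^esub> a \<otimes>\<^bsub>G\<^esub> gp M \<otimes>\<^bsub>G\<^esub> inv\<^bsub>G\<^esub> (inv\<^bsub>G\<^esub> a) = gp (M * p)" by (simp only: pMp)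
    have "h \<otimes>\<^bsub>G\<^esub> gp M \<otimes>\<^bsub>G\<^esub> inv\<^bsub>G\<^esub> h = x \<otimes>\<^bsub>G\<^esub> gp (M * p) \<otimes>\<^bsub>G\<^esub> inv\<^bsub>G\<^esub> x"
      unfolding h_def using group.cj_mult[OF grp xc ai gp_in, of M] e2 by simp
    also have "\<dots> = gp (p * M * p)" using cj_pow_gp[OF xc ex, of p] .
    also have "\<dots> = gp M" by (simp only: pMp)
    finally show ?thesis unfolding U_def using hc xh by blast
  qed
  have "U = S" using L1 L2 by blast
  then show ?thesis unfolding U_def S_def .
qed

end

theorem mainTheorem16:
  fixes G :: "('g, 'b) monoid_scheme" and \<phi> :: "'g \<Rightarrow> 'x::metric_space \<Rightarrow> 'x"
    and \<Gamma> :: "'x rpath set" and \<mu> \<nu> \<delta> :: real and g :: 'g and A :: "'x set"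
  assumes "path_system_group \<mu> \<nu> G \<phi> \<Gamma>"
    and "constricting_element G \<phi> \<Gamma> \<delta> g A"
  shows "\<exists>\<theta>::real. \<theta> \<ge> 1 \<and> (\<exists>M::int. 1 \<le> M \<and> real_of_int M \<le> \<theta> \<and>
     (\<forall>u\<in>carrier G.
        (u \<in> elementary_closure G \<phi> A \<longleftrightarrow>
           (\<exists>p\<in>{-1, 1::int}. u \<otimes>\<^bsub>G\<^esub> (g [^]\<^bsub>G\<^esub> M) \<otimes>\<^bsub>G\<^esub> inv\<^bsub>G\<^esub> u = g [^]\<^bsub>G\<^esub> (p * M))) \<and>
        (u \<in> elementary_closure G \<phi> A \<longleftrightarrow>
           (\<exists>(m::int) (n::int). m \<noteq> 0 \<and> n \<noteq> 0 \<and>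
              u \<otimes>\<^bsub>G\<^esub> (g [^]\<^bsub>G\<^esub> m) \<otimes>\<^bsub>G\<^esub> inv\<^bsub>G\<^esub> u = g [^]\<^bsub>G\<^esub> n))) \<and>
     finite (rcosets\<^bsub>G\<lparr>carrier := elementary_closure G \<phi> A\<rparr>\<^esub>
               {u \<in> carrier G. u \<otimes>\<^bsub>G\<^esub> (g [^]\<^bsub>G\<^esub> M) \<otimes>\<^bsub>G\<^esub> inv\<^bsub>G\<^esub> u = g [^]\<^bsub>G\<^esub> M}) \<and>
     card (rcosets\<^bsub>G\<lparr>carrier := elementary_closure G \<phi> A\<rparr>\<^esub>
               {u \<in> carrier G. u \<otimes>\<^bsub>G\<^esub> (g [^]\<^bsub>G\<^esub> M) \<otimes>\<^bsub>G\<^esub> inv\<^bsub>G\<^esub> u = g [^]\<^bsub>G\<^esub> M}) \<le> 2)"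
proof -
  interpret P: PCE \<mu> \<nu> G \<phi> \<Gamma> \<delta> g A
    by (intro PCE.intro PSys.intro PCE_axioms.intro assms)
  let ?E = "elementary_closure G \<phi> A"
  obtain N where N: "\<forall>u\<in>?E. \<exists>m::int. 1 \<le> m \<and> m \<le> int N \<and> (\<exists>n::int. u \<otimes>\<^bsub>G\<^esub> (g [^]\<^bsub>G\<^esub> m) \<otimes>\<^bsub>G\<^esub> inv\<^bsub>G\<^esub> u = g [^]\<^bsub>G\<^esub> n)"
    using P.PH by blast
  have oneE: "\<one>\<^bsub>G\<^esub> \<in> ?E" using P.E_gp[of 0] by simp
  then obtain m0 where "1 \<le> m0" "m0 \<le> int N" using N by blast
  then have N1: "1 \<le> N" by simp
  define M where "M = int (fact N)"
  have M1: "1 \<le> M" unfolding M_def by simp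
  have I_II: "\<exists>p\<in>{-1, 1::int}. u \<otimes>\<^bsub>G\<^esub> (g [^]\<^bsub>G\<^esub> M) \<otimes>\<^bsub>G\<^esub> inv\<^bsub>G\<^esub> u = g [^]\<^bsub>G\<^esub> (p * M)"
    if u: "u \<in> ?E" for u
  proof -
    obtain m n :: int where mn: "1 \<le> m" "m \<le> int N" "u \<otimes>\<^bsub>G\<^esub> (g [^]\<^bsub>G\<^esub> m) \<otimes>\<^bsub>G\<^esub> inv\<^bsub>G\<^esub> u = g [^]\<^bsub>G\<^esub> n"
      using N u by blast
    have an: "\<bar>n\<bar> = m" using P.abs_eq[OF u mn(1) mn(3)] .
    have "nat m dvd fact N" using mn by (intro dvd_fact) auto
    then have "int (nat m) dvd int (fact N)" by (simp only: of_nat_dvd_iff)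
    then have "m dvd M" unfolding M_def using mn by simp
    then obtain q where q: "M = m * q" by (auto simp: dvd_def)
    have uc: "u \<in> carrier G" using u P.E_sub by auto
    have e: "u \<otimes>\<^bsub>G\<^esub> (g [^]\<^bsub>G\<^esub> (m * q)) \<otimes>\<^bsub>G\<^esub> inv\<^bsub>G\<^esub> u = g [^]\<^bsub>G\<^esub> (n * q)"
      using P.cj_pow_gp[OF uc mn(3)] .
    show ?thesis
    proof (cases "n = m")
      case True
      then show ?thesis using e q by (intro bexI[of _ 1]) auto
    next
      case False
      then have "n = - m" using an by auto
      then show ?thesis using e q by (intro bexI[of _ "-1"]) auto
    qed
  qed
  have III_I: "u \<in> ?E" if "u \<in> carrier G" "m \<noteq> 0" "n \<noteq> 0"
    "u \<otimes>\<^bsub>G\<^esub> (g [^]\<^bsub>G\<^esub> m) \<otimes>\<^bsub>G\<^esub> inv\<^bsub>G\<^esub> u = g [^]\<^bsub>G\<^esub> n" for u and m n :: int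
    using P.III_imp_I[OF that] .
  have equiv: "(u \<in> ?E \<longleftrightarrow>
           (\<exists>p\<in>{-1, 1::int}. u \<otimes>\<^bsub>G\<^esub> (g [^]\<^bsub>G\<^esub> M) \<otimes>\<^bsub>G\<^esub> inv\<^bsub>G\<^esub> u = g [^]\<^bsub>G\<^esub> (p * M))) \<and>
        (u \<in> ?E \<longleftrightarrow>
           (\<exists>(m::int) (n::int). m \<noteq> 0 \<and> n \<noteq> 0 \<and>
              u \<otimes>\<^bsub>G\<^esub> (g [^]\<^bsub>G\<^esub> m) \<otimes>\<^bsub>G\<^esub> inv\<^bsub>G\<^esub> u = g [^]\<^bsub>G\<^esub> n))"
    if u: "u \<in> carrier G" for u
  proof -
    have II_I: "u \<in> ?E" if ex2: "\<exists>p\<in>{-1, 1::int}. u \<otimes>\<^bsub>G\<^esub> (g [^]\<^bsub>G\<^esub> M) \<otimes>\<^bsub>G\<^esub> inv\<^bsub>G\<^esub> u = g [^]\<^bsub>G\<^esub> (p * M)"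
    proof -
      obtain p where p: "p \<in> {-1, 1::int}" "u \<otimes>\<^bsub>G\<^esub> (g [^]\<^bsub>G\<^esub> M) \<otimes>\<^bsub>G\<^esub> inv\<^bsub>G\<^esub> u = g [^]\<^bsub>G\<^esub> (p * M)"
        using ex2 by blast
      have "p * M \<noteq> 0" using p(1) M1 by auto
      moreover have "M \<noteq> 0" using M1 by simp
      ultimately show ?thesis using III_I[OF u _ _ p(2)] by blast
    qed
    have I_III: "\<exists>(m::int) (n::int). m \<noteq> 0 \<and> n \<noteq> 0 \<and>
              u \<otimes>\<^bsub>G\<^esub> (g [^]\<^bsub>G\<^esub> m) \<otimes>\<^bsub>G\<^esub> inv\<^bsub>G\<^esub> u = g [^]\<^bsub>G\<^esub> n" if uE: "u \<in> ?E"
    proof -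
      obtain p where p: "p \<in> {-1, 1::int}" "u \<otimes>\<^bsub>G\<^esub> (g [^]\<^bsub>G\<^esub> M) \<otimes>\<^bsub>G\<^esub> inv\<^bsub>G\<^esub> u = g [^]\<^bsub>G\<^esub> (p * M)"
        using I_II[OF uE] by blast
      have "p * M \<noteq> 0" using p(1) M1 by auto
      then show ?thesis using p(2) M1 by (intro exI[of _ M] exI[of _ "p * M"]) auto
    qed
    show ?thesis
    proof (intro conjI iffI)
      assume "u \<in> ?E"
      then show "\<exists>p\<in>{-1, 1::int}. u \<otimes>\<^bsub>G\<^esub> (g [^]\<^bsub>G\<^esub> M) \<otimes>\<^bsub>G\<^esub> inv\<^bsub>G\<^esub> u = g [^]\<^bsub>G\<^esub> (p * M)"
        by (rule I_II)
    next
      assume "\<exists>p\<in>{-1, 1::int}. u \<otimes>\<^bsub>G\<^esub> (g [^]\<^bsub>G\<^esub> M) \<otimes>\<^bsub>G\<^esub> inv\<^bsub>G\<^esub> u = g [^]\<^bsub>G\<^esub> (p * M)"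
      then show "u \<in> ?E" by (rule II_I)
    next
      assume "u \<in> ?E"
      then show "\<exists>(m::int) (n::int). m \<noteq> 0 \<and> n \<noteq> 0 \<and>
              u \<otimes>\<^bsub>G\<^esub> (g [^]\<^bsub>G\<^esub> m) \<otimes>\<^bsub>G\<^esub> inv\<^bsub>G\<^esub> u = g [^]\<^bsub>G\<^esub> n" by (rule I_III)
    next
      assume "\<exists>(m::int) (n::int). m \<noteq> 0 \<and> n \<noteq> 0 \<and>
              u \<otimes>\<^bsub>G\<^esub> (g [^]\<^bsub>G\<^esub> m) \<otimes>\<^bsub>G\<^esub> inv\<^bsub>G\<^esub> u = g [^]\<^bsub>G\<^esub> n"
      then obtain m n :: int where mn: "m \<noteq> 0" "n \<noteq> 0"
        "u \<otimes>\<^bsub>G\<^esub> (g [^]\<^bsub>G\<^esub> m) \<otimes>\<^bsub>G\<^esub> inv\<^bsub>G\<^esub> u = g [^]\<^bsub>G\<^esub> n" by blast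
      show "u \<in> ?E" using III_I[OF u mn] .
    qed
  qed
  define Ep where "Ep = {u \<in> carrier G. u \<otimes>\<^bsub>G\<^esub> (g [^]\<^bsub>G\<^esub> M) \<otimes>\<^bsub>G\<^esub> inv\<^bsub>G\<^esub> u = g [^]\<^bsub>G\<^esub> M}"
  define S where "S p = {x \<in> carrier G. x \<otimes>\<^bsub>G\<^esub> (g [^]\<^bsub>G\<^esub> M) \<otimes>\<^bsub>G\<^esub> inv\<^bsub>G\<^esub> x = g [^]\<^bsub>G\<^esub> (p * M)}" for p :: int
  have key: "(\<Union>h\<in>Ep. {h \<otimes>\<^bsub>G\<^esub> a}) \<in> S ` {-1, 1}" if aE: "a \<in> ?E" for a
  proof -
    obtain p where p: "p \<in> {-1, 1::int}" "a \<otimes>\<^bsub>G\<^esub> (g [^]\<^bsub>G\<^esub> M) \<otimes>\<^bsub>G\<^esub> inv\<^bsub>G\<^esub> a = g [^]\<^bsub>G\<^esub> (p * M)"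
      using I_II[OF aE] by blast
    have ac: "a \<in> carrier G" using aE P.E_sub by auto
    have "(\<Union>h\<in>Ep. {h \<otimes>\<^bsub>G\<^esub> a}) = S p" unfolding Ep_def S_def using P.coset_char[OF ac p] .
    then show ?thesis using p(1) by blast
  qed
  have sub: "rcosets\<^bsub>G\<lparr>carrier := ?E\<rparr>\<^esub> Ep \<subseteq> S ` {-1, 1}"
    unfolding RCOSETS_def r_coset_def using key by auto
  have fin: "finite (rcosets\<^bsub>G\<lparr>carrier := ?E\<rparr>\<^esub> Ep)"
    using finite_subset[OF sub] by simp
  have "card (rcosets\<^bsub>G\<lparr>carrier := ?E\<rparr>\<^esub> Ep) \<le> card (S ` {-1, 1})"
    using card_mono[OF _ sub] by simp
  also have "\<dots> \<le> card {-1, 1::int}" by (rule card_image_le) simp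
  also have "\<dots> = 2" by simp
  finally have card2: "card (rcosets\<^bsub>G\<lparr>carrier := ?E\<rparr>\<^esub> Ep) \<le> 2" .
  show ?thesis
    using M1 equiv fin card2 unfolding Ep_def
    by (intro exI[of _ "real_of_int M"] conjI exI[of _ M]) auto
qed

end
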